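(* Let $n=1$. For every $m\in\mathbb{N}_0$, the projection $E_m$ belongs to $\mathcal{W}^{2,1}(\mathcal{F}^2)$, and $$\Delta E_m=\pi\big(mE_{m-1}-(2m+1)E_m+(m+1)E_{m+1}\big),$$ where the term $mE_{m-1}$ is interpreted as $0$ when $m=0$.
   Context: $\mathcal{F}^2(\mathbb{C})$ is the Fock space of entire functions on $\mathbb{C}$ square integrable with respect to $e^{-\pi|z|^2}dz$, with normalized kernels $k_z(w)=e^{\pi\bar zw-\pi|z|^2/2}$ and orthonormal basis $e_m(z)=\sqrt{\pi^m/m!}\,z^m$. $E_m$ is the orthogonal projection onto $\mathrm{span}\,e_m$. $B(S)(z)=\langle Sk_z,k_z\rangle$ and $\Delta=\partial_z\partial_{\bar z}$. $\mathcal{W}^{2,1}(\mathcal{F}^2)$ is the set of bounded $S$ with $\Delta B(S)=B(T)$ for some trace-class $T$, and then $\Delta S:=T$. *)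

theory Defs
  imports "HOL-Analysis.Analysis"
begin

definition fock_space :: "(complex \<Rightarrow> complex) set" where
  "fock_space = {f. f holomorphic_on UNIV \<and>
     integrable lborel (\<lambda>w. (cmod (f w))\<^sup>2 * exp (- pi * (cmod w)\<^sup>2))}"

definition fock_inner :: "(complex \<Rightarrow> complex) \<Rightarrow> (complex \<Rightarrow> complex) \<Rightarrow> complex" where
  "fock_inner f g = (LINT w|lborel. f w * cnj (g w) * complex_of_real (exp (- pi * (cmod w)\<^sup>2)))"

definition fock_norm :: "(complex \<Rightarrow> complex) \<Rightarrow> real" where
  "fock_norm f = sqrt (Re (fock_inner f f))"

definition fock_kernel :: "complex \<Rightarrow> complex \<Rightarrow> complex" where
  "fock_kernel z = (\<lambda>w. exp (complex_of_real pi * cnj z * w - complex_of_real (pi * (cmod z)\<^sup>2 / 2)))"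

definition fock_basis :: "nat \<Rightarrow> complex \<Rightarrow> complex" where
  "fock_basis m = (\<lambda>w. complex_of_real (sqrt (pi ^ m / fact m)) * w ^ m)"

definition fock_proj :: "nat \<Rightarrow> (complex \<Rightarrow> complex) \<Rightarrow> (complex \<Rightarrow> complex)" where
  "fock_proj m f = (\<lambda>w. fock_inner f (fock_basis m) * fock_basis m w)"

text \<open>Bounded (linear) operators on F^2; operators are maps on functions,
  only their action on F^2 matters.\<close>

definition fock_bounded :: "((complex \<Rightarrow> complex) \<Rightarrow> (complex \<Rightarrow> complex)) \<Rightarrow> bool" where
  "fock_bounded S \<longleftrightarrow>
     (\<forall>f\<in>fock_space. S f \<in> fock_space) \<and>
     (\<forall>f\<in>fock_space. \<forall>g\<in>fock_space. \<forall>a b.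
        S (\<lambda>w. a * f w + b * g w) = (\<lambda>w. a * S f w + b * S g w)) \<and>
     (\<exists>C. \<forall>f\<in>fock_space. fock_norm (S f) \<le> C * fock_norm f)"

text \<open>Trace class = nuclear operators: T h = sum_k <h, g_k> f_k with
  sum_k ||f_k|| ||g_k|| < infinity.\<close>

definition fock_trace_class :: "((complex \<Rightarrow> complex) \<Rightarrow> (complex \<Rightarrow> complex)) \<Rightarrow> bool" where
  "fock_trace_class T \<longleftrightarrow> fock_bounded T \<and>
     (\<exists>f g :: nat \<Rightarrow> complex \<Rightarrow> complex.
        (\<forall>k. f k \<in> fock_space \<and> g k \<in> fock_space) \<and>
        summable (\<lambda>k. fock_norm (f k) * fock_norm (g k)) \<and>
        (\<forall>h\<in>fock_space. \<forall>w. T h w = (\<Sum>k. fock_inner h (g k) * f k w)))"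

definition berezin :: "((complex \<Rightarrow> complex) \<Rightarrow> (complex \<Rightarrow> complex)) \<Rightarrow> complex \<Rightarrow> complex" where
  "berezin S z = fock_inner (S (fock_kernel z)) (fock_kernel z)"

text \<open>Classical Laplacian Delta = d_z d_zbar = (1/4)(d_x^2 + d_y^2):
  F has (pointwise existing second partial derivatives and) Laplacian G.\<close>

definition has_laplacian :: "(complex \<Rightarrow> complex) \<Rightarrow> (complex \<Rightarrow> complex) \<Rightarrow> bool" where
  "has_laplacian F G \<longleftrightarrow>
     (\<exists>Fx Fy Fxx Fyy :: complex \<Rightarrow> complex. \<forall>z.
        ((\<lambda>t::real. F (z + complex_of_real t)) has_vector_derivative Fx z) (at 0) \<and>
        ((\<lambda>t::real. F (z + \<i> * complex_of_real t)) has_vector_derivative Fy z) (at 0) \<and>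
        ((\<lambda>t::real. Fx (z + complex_of_real t)) has_vector_derivative Fxx z) (at 0) \<and>
        ((\<lambda>t::real. Fy (z + \<i> * complex_of_real t)) has_vector_derivative Fyy z) (at 0) \<and>
        G z = (Fxx z + Fyy z) / 4)"

definition W21 :: "((complex \<Rightarrow> complex) \<Rightarrow> (complex \<Rightarrow> complex)) \<Rightarrow> bool" where
  "W21 S \<longleftrightarrow> fock_bounded S \<and>
     (\<exists>T. fock_trace_class T \<and> has_laplacian (berezin S) (berezin T))"

end

theory Submission
  imports Defs "HOL-Complex_Analysis.Complex_Analysis" "HOL-Probability.Probability"
begin


lemma complex_pair_meas[measurable]: "(\<lambda>p. Complex (fst p) (snd p)) \<in> borel_measurable (borel :: (real \<times> real) measure)"
  by (intro borel_measurable_continuous_onI continuous_intros)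

lemma lborel_complex: "lborel = distr (lborel \<Otimes>\<^sub>M lborel) borel (\<lambda>p. Complex (fst p) (snd p))"
proof (rule lborel_eqI)
  fix l u :: complex assume lu: "\<And>b. b \<in> Basis \<Longrightarrow> l \<bullet> b \<le> u \<bullet> b"
  have pre: "(\<lambda>p. Complex (fst p) (snd p)) -` box l u \<inter> space (lborel \<Otimes>\<^sub>M lborel) =
      box (Re l) (Re u) \<times> box (Im l) (Im u)"
    by (auto simp: box_def Basis_complex_def space_pair_measure)
  have m: "(\<lambda>p. Complex (fst p) (snd p)) \<in> measurable (lborel \<Otimes>\<^sub>M lborel) borel"
    using complex_pair_meas by (simp add: measurable_lborel1 lborel_prod)
  show "emeasure (distr (lborel \<Otimes>\<^sub>M lborel) borel (\<lambda>p. Complex (fst p) (snd p))) (box l u) = (\<Prod>b\<in>Basis. (u - l) \<bullet> b)"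
  proof -
    have "Re l \<le> Re u" "Im l \<le> Im u" using lu[of 1] lu[of \<i>] by auto
    then show ?thesis
      by (simp add: emeasure_distr m pre lborel.emeasure_pair_measure_Times Basis_complex_def ennreal_mult)
  qed
qed simp

lemma emeasure_lborel_translate:
  fixes B :: "real set" assumes "B \<in> sets borel"
  shows "emeasure lborel ((\<lambda>y. y + c) -` B) = emeasure lborel B"
proof -
  have "emeasure lborel B = emeasure (distr lborel borel ((+) c)) B"
    by (simp add: lborel_distr_plus)
  also have "\<dots> = emeasure lborel ((+) c -` B)"
    using assms by (subst emeasure_distr) auto
  also have "(+) c -` B = (\<lambda>y. y + c) -` B" by (auto simp: add.commute)
  finally show ?thesis by simp
qed

lemma shear2:
  "distr (lborel \<Otimes>\<^sub>M lborel) (lborel \<Otimes>\<^sub>M lborel) (\<lambda>p. (fst p, snd p + t * fst p)) = (lborel \<Otimes>\<^sub>M lborel :: (real \<times> real) measure)"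
proof (rule measure_eqI)
  fix A assume A: "A \<in> sets (distr (lborel \<Otimes>\<^sub>M lborel) (lborel \<Otimes>\<^sub>M lborel) (\<lambda>p. (fst p, snd p + t * fst p)))"
  then have A': "A \<in> sets (lborel \<Otimes>\<^sub>M lborel)" by simp
  have m: "(\<lambda>p::real\<times>real. (fst p, snd p + t * fst p)) \<in> measurable (lborel \<Otimes>\<^sub>M lborel) (lborel \<Otimes>\<^sub>M lborel)"
    by measurable
  have pre: "(\<lambda>p::real\<times>real. (fst p, snd p + t * fst p)) -` A \<inter> space (lborel \<Otimes>\<^sub>M lborel) \<in> sets (lborel \<Otimes>\<^sub>M lborel)"
    using m A' by (rule measurable_sets)
  have "emeasure (distr (lborel \<Otimes>\<^sub>M lborel) (lborel \<Otimes>\<^sub>M lborel) (\<lambda>p. (fst p, snd p + t * fst p))) A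
      = emeasure (lborel \<Otimes>\<^sub>M lborel) ((\<lambda>p::real\<times>real. (fst p, snd p + t * fst p)) -` A \<inter> space (lborel \<Otimes>\<^sub>M lborel))"
    using m A' by (rule emeasure_distr)
  also have "\<dots> = (\<integral>\<^sup>+x. emeasure lborel (Pair x -` ((\<lambda>p::real\<times>real. (fst p, snd p + t * fst p)) -` A \<inter> space (lborel \<Otimes>\<^sub>M lborel))) \<partial>lborel)"
    using pre by (rule lborel.emeasure_pair_measure_alt)
  also have "\<dots> = (\<integral>\<^sup>+x. emeasure lborel (Pair x -` A) \<partial>lborel)"
  proof (rule nn_integral_cong)
    fix x :: real
    have "Pair x -` ((\<lambda>p::real\<times>real. (fst p, snd p + t * fst p)) -` A \<inter> space (lborel \<Otimes>\<^sub>M lborel))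
        = (\<lambda>y. y + t * x) -` (Pair x -` A)"
      by (auto simp: space_pair_measure)
    moreover have "Pair x -` A \<in> sets borel"
      using sets_Pair1[OF A'] by simp
    ultimately show "emeasure lborel (Pair x -` ((\<lambda>p::real\<times>real. (fst p, snd p + t * fst p)) -` A \<inter> space (lborel \<Otimes>\<^sub>M lborel))) = emeasure lborel (Pair x -` A)"
      by (simp add: emeasure_lborel_translate)
  qed
  also have "\<dots> = emeasure (lborel \<Otimes>\<^sub>M lborel) A"
    using A' by (rule lborel.emeasure_pair_measure_alt[symmetric])
  finally show "emeasure (distr (lborel \<Otimes>\<^sub>M lborel) (lborel \<Otimes>\<^sub>M lborel) (\<lambda>p. (fst p, snd p + t * fst p))) A = emeasure (lborel \<Otimes>\<^sub>M lborel) A" .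
qed simp

lemma shear1:
  "distr (lborel \<Otimes>\<^sub>M lborel) (lborel \<Otimes>\<^sub>M lborel) (\<lambda>p. (fst p + t * snd p, snd p)) = (lborel \<Otimes>\<^sub>M lborel :: (real \<times> real) measure)"
proof (rule measure_eqI)
  fix A assume A: "A \<in> sets (distr (lborel \<Otimes>\<^sub>M lborel) (lborel \<Otimes>\<^sub>M lborel) (\<lambda>p. (fst p + t * snd p, snd p)))"
  then have A': "A \<in> sets (lborel \<Otimes>\<^sub>M lborel)" by simp
  have m: "(\<lambda>p::real\<times>real. (fst p + t * snd p, snd p)) \<in> measurable (lborel \<Otimes>\<^sub>M lborel) (lborel \<Otimes>\<^sub>M lborel)"
    by measurable
  have pre: "(\<lambda>p::real\<times>real. (fst p + t * snd p, snd p)) -` A \<inter> space (lborel \<Otimes>\<^sub>M lborel) \<in> sets (lborel \<Otimes>\<^sub>M lborel)"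
    using m A' by (rule measurable_sets)
  have "emeasure (distr (lborel \<Otimes>\<^sub>M lborel) (lborel \<Otimes>\<^sub>M lborel) (\<lambda>p. (fst p + t * snd p, snd p))) A
      = emeasure (lborel \<Otimes>\<^sub>M lborel) ((\<lambda>p::real\<times>real. (fst p + t * snd p, snd p)) -` A \<inter> space (lborel \<Otimes>\<^sub>M lborel))"
    using m A' by (rule emeasure_distr)
  also have "\<dots> = (\<integral>\<^sup>+y. emeasure lborel ((\<lambda>x. (x, y)) -` ((\<lambda>p::real\<times>real. (fst p + t * snd p, snd p)) -` A \<inter> space (lborel \<Otimes>\<^sub>M lborel))) \<partial>lborel)"
    using pre by (rule lborel_pair.emeasure_pair_measure_alt2)
  also have "\<dots> = (\<integral>\<^sup>+y. emeasure lborel ((\<lambda>x. (x, y)) -` A) \<partial>lborel)"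
  proof (rule nn_integral_cong)
    fix y :: real
    have "(\<lambda>x. (x, y)) -` ((\<lambda>p::real\<times>real. (fst p + t * snd p, snd p)) -` A \<inter> space (lborel \<Otimes>\<^sub>M lborel))
        = (\<lambda>x. x + t * y) -` ((\<lambda>x. (x, y)) -` A)"
      by (auto simp: space_pair_measure)
    moreover have "(\<lambda>x. (x, y)) -` A \<in> sets borel"
      using sets_Pair2[OF A'] by simp
    ultimately show "emeasure lborel ((\<lambda>x. (x, y)) -` ((\<lambda>p::real\<times>real. (fst p + t * snd p, snd p)) -` A \<inter> space (lborel \<Otimes>\<^sub>M lborel))) = emeasure lborel ((\<lambda>x. (x, y)) -` A)"
      by (simp add: emeasure_lborel_translate)
  qed
  also have "\<dots> = emeasure (lborel \<Otimes>\<^sub>M lborel) A"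
    using A' by (rule lborel_pair.emeasure_pair_measure_alt2[symmetric])
  finally show "emeasure (distr (lborel \<Otimes>\<^sub>M lborel) (lborel \<Otimes>\<^sub>M lborel) (\<lambda>p. (fst p + t * snd p, snd p))) A = emeasure (lborel \<Otimes>\<^sub>M lborel) A" .
qed simp

lemma rotation_matrix_eq:
  fixes a b t x y :: real
  assumes ab: "a\<^sup>2 + b\<^sup>2 = 1" and a: "a \<noteq> -1" and t: "t = - b / (1 + a)"
  shows "(x + t * y) + t * (y + b * (x + t * y)) = a * x - b * y"
    and "y + b * (x + t * y) = b * x + a * y"
proof -
  have a1: "1 + a \<noteq> 0" using a by auto
  have bb: "b * b = (1 - a) * (1 + a)" using ab by (simp add: power2_eq_square algebra_simps)
  have tb: "t * b = a - 1"
  proof -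
    have "t * b = - (b * b) / (1 + a)" using t by simp
    also have "\<dots> = a - 1" using a1 bb by (simp add: field_simps)
    finally show ?thesis .
  qed
  have tt: "t * (1 + a) = - b" using t a1 by (simp add: field_simps)
  show "(x + t * y) + t * (y + b * (x + t * y)) = a * x - b * y"
  proof -
    have "(x + t * y) + t * (y + b * (x + t * y)) = x * (1 + t * b) + y * (t * (2 + t * b))"
      by (simp add: algebra_simps)
    also have "\<dots> = a * x - b * y"
    proof -
      have e1: "1 + t * b = a" using tb by simp
      have "t * (2 + t * b) = t * (2 + (a - 1))" using tb by simp
      also have "\<dots> = t * (1 + a)" by simp
      finally have e2: "t * (2 + t * b) = - b" using tt by simp
      show ?thesis unfolding e1 e2 by simp
    qed
    finally show ?thesis .
  qed
  have "y + b * (x + t * y) = b * x + y * (1 + t * b)" by (simp add: algebra_simps)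
  also have "\<dots> = b * x + a * y" using tb by simp
  finally show "y + b * (x + t * y) = b * x + a * y" .
qed

lemma lborel_rotation:
  fixes c :: complex assumes c: "cmod c = 1"
  shows "distr lborel borel (\<lambda>w. c * w) = (lborel :: complex measure)"
proof (cases "c = -1")
  case True
  have "(lborel :: complex measure) = density (distr lborel borel uminus) (\<lambda>x. 1)"
    using lborel_affine[of "-1" "0::complex"] by simp
  also have "\<dots> = distr lborel borel (\<lambda>w. c * w)"
    using True by (simp add: density_1)
  finally show ?thesis by simp
next
  case False
  define a where "a = Re c"
  define b where "b = Im c"
  define t where "t = - b / (1 + a)"
  have ab: "a\<^sup>2 + b\<^sup>2 = 1" using c unfolding a_def b_def cmod_def by simp
  have a: "a \<noteq> -1"
  proof
    assume "a = -1"
    then have "b = 0" using ab by simp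
    then have "c = -1" using \<open>a = -1\<close> unfolding a_def b_def by (simp add: complex_eq_iff)
    then show False using False by simp
  qed
  let ?P = "lborel \<Otimes>\<^sub>M lborel :: (real \<times> real) measure"
  let ?Cx = "\<lambda>p::real\<times>real. Complex (fst p) (snd p)"
  let ?S1 = "\<lambda>p::real\<times>real. (fst p + t * snd p, snd p)"
  let ?S2 = "\<lambda>p::real\<times>real. (fst p, snd p + b * fst p)"
  have mC: "?Cx \<in> measurable ?P borel"
    using complex_pair_meas by (simp add: measurable_lborel1 lborel_prod)
  have m1: "?S1 \<in> measurable ?P ?P" by measurable
  have m2: "?S2 \<in> measurable ?P ?P" by measurable
  have mc: "(\<lambda>w. c * w) \<in> measurable (borel :: complex measure) borel" by measurable
  have eq: "(\<lambda>w. c * w) \<circ> ?Cx = ?Cx \<circ> ?S1 \<circ> ?S2 \<circ> ?S1"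
  proof
    fix p :: "real \<times> real"
    obtain x y where p: "p = (x, y)" by (cases p)
    have c': "c = Complex a b" unfolding a_def b_def by simp
    have r1: "(x + t * y) + t * (y + b * (x + t * y)) = a * x - b * y"
      by (rule rotation_matrix_eq(1)[OF ab a t_def])
    have r2: "y + b * (x + t * y) = b * x + a * y"
      by (rule rotation_matrix_eq(2)[OF ab a t_def])
    have "(?Cx \<circ> ?S1 \<circ> ?S2 \<circ> ?S1) p = Complex ((x + t * y) + t * (y + b * (x + t * y))) (y + b * (x + t * y))"
      by (simp add: p)
    also have "\<dots> = Complex (a * x - b * y) (b * x + a * y)" using r1 r2 by simp
    also have "\<dots> = ((\<lambda>w. c * w) \<circ> ?Cx) p"
      by (simp add: p c' complex_eq_iff algebra_simps)
    finally show "((\<lambda>w. c * w) \<circ> ?Cx) p = (?Cx \<circ> ?S1 \<circ> ?S2 \<circ> ?S1) p" by simp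
  qed
  have "distr lborel borel (\<lambda>w. c * w) = distr (distr ?P borel ?Cx) borel (\<lambda>w. c * w)"
    by (simp add: lborel_complex[symmetric])
  also have "\<dots> = distr ?P borel ((\<lambda>w. c * w) \<circ> ?Cx)"
    by (rule distr_distr[OF mc mC])
  also have "\<dots> = distr ?P borel (?Cx \<circ> ?S1 \<circ> ?S2 \<circ> ?S1)" by (simp only: eq)
  also have "\<dots> = distr (distr ?P ?P ?S1) borel (?Cx \<circ> ?S1 \<circ> ?S2)"
    by (rule distr_distr[symmetric]) (use m1 m2 mC in \<open>auto intro: measurable_comp\<close>)
  also have "\<dots> = distr ?P borel (?Cx \<circ> ?S1 \<circ> ?S2)" by (simp only: shear1)
  also have "\<dots> = distr (distr ?P ?P ?S2) borel (?Cx \<circ> ?S1)"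
    by (rule distr_distr[symmetric]) (use m1 m2 mC in \<open>auto intro: measurable_comp\<close>)
  also have "\<dots> = distr ?P borel (?Cx \<circ> ?S1)" by (simp only: shear2)
  also have "\<dots> = distr (distr ?P ?P ?S1) borel ?Cx"
    by (rule distr_distr[symmetric]) (use m1 m2 mC in \<open>auto intro: measurable_comp\<close>)
  also have "\<dots> = distr ?P borel ?Cx" by (simp only: shear1)
  also have "\<dots> = lborel" by (simp add: lborel_complex[symmetric])
  finally show ?thesis .
qed



lemma integrable_rotation:
  fixes f :: "complex \<Rightarrow> 'b::{banach, second_countable_topology}"
  assumes c: "cmod c = 1" and f: "integrable lborel f"
  shows "integrable lborel (\<lambda>w. f (c * w))"
proof -
  have fm: "f \<in> borel_measurable borel" using borel_measurable_integrable[OF f] by simp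
  have "integrable (distr lborel borel (\<lambda>w. c * w)) f" using f by (simp add: lborel_rotation[OF c])
  then show ?thesis by (subst (asm) integrable_distr_eq) (use fm in auto)
qed

lemma integral_rotation:
  fixes f :: "complex \<Rightarrow> 'b::{banach, second_countable_topology}"
  assumes c: "cmod c = 1" and fm: "f \<in> borel_measurable borel"
  shows "(\<integral>w. f (c * w) \<partial>lborel) = integral\<^sup>L lborel f"
proof -
  have "integral\<^sup>L lborel f = integral\<^sup>L (distr lborel borel (\<lambda>w. c * w)) f" by (simp add: lborel_rotation[OF c])
  also have "\<dots> = (\<integral>w. f (c * w) \<partial>lborel)" by (rule integral_distr) (use fm in auto)
  finally show ?thesis by simp
qed

lemma integrable_translate:
  fixes f :: "complex \<Rightarrow> 'b::{banach, second_countable_topology}"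
  assumes f: "integrable lborel f"
  shows "integrable lborel (\<lambda>w. f (z + w))"
proof -
  have fm: "f \<in> borel_measurable borel" using borel_measurable_integrable[OF f] by simp
  have "integrable (distr lborel borel ((+) z)) f" using f by (simp add: lborel_distr_plus)
  then show ?thesis by (subst (asm) integrable_distr_eq) (use fm in auto)
qed

lemma integral_translate:
  fixes f :: "complex \<Rightarrow> 'b::{banach, second_countable_topology}"
  assumes fm: "f \<in> borel_measurable borel"
  shows "(\<integral>w. f (z + w) \<partial>lborel) = integral\<^sup>L lborel f"
proof -
  have "integral\<^sup>L lborel f = integral\<^sup>L (distr lborel borel ((+) z)) f" by (simp add: lborel_distr_plus)
  also have "\<dots> = (\<integral>w. f (z + w) \<partial>lborel)" by (rule integral_distr) (use fm in auto)
  finally show ?thesis by simp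
qed

lemma integrable_gauss1:
  fixes a :: real assumes a: "a > 0"
  shows "integrable lborel (\<lambda>x::real. exp (- a * x\<^sup>2))"
proof -
  define s where "s = 1 / sqrt (2 * a)"
  have s: "s > 0" using a by (simp add: s_def)
  have ss: "2 * s\<^sup>2 = 1 / a" using a by (simp add: s_def power_divide)
  have sp: "sqrt (2 * pi * s\<^sup>2) > 0" using s by simp
  have eq: "exp (- a * x\<^sup>2) = sqrt (2 * pi * s\<^sup>2) * normal_density 0 s x" for x
  proof -
    have "-(x - 0)\<^sup>2 / (2 * s\<^sup>2) = -(x\<^sup>2) / (1 / a)" by (simp only: ss) simp
    also have "\<dots> = - a * x\<^sup>2" by simp
    finally have e: "-(x - 0)\<^sup>2 / (2 * s\<^sup>2) = - a * x\<^sup>2" .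
    show ?thesis unfolding normal_density_def e using sp s by simp
  qed
  show ?thesis
    using s unfolding eq by (intro integrable_mult_right integrable_normal_density)
qed

lemma integrable_on_complex_iff:
  fixes f :: "complex \<Rightarrow> 'b::{banach, second_countable_topology}"
  assumes fm: "f \<in> borel_measurable borel"
  shows "integrable lborel f \<longleftrightarrow> integrable (lborel \<Otimes>\<^sub>M lborel) (\<lambda>p. f (Complex (fst p) (snd p)))"
proof -
  have mC: "(\<lambda>p::real\<times>real. Complex (fst p) (snd p)) \<in> measurable (lborel \<Otimes>\<^sub>M lborel) borel"
    using complex_pair_meas by (simp add: measurable_lborel1 lborel_prod)
  have "integrable lborel f \<longleftrightarrow> integrable (distr (lborel \<Otimes>\<^sub>M lborel) borel (\<lambda>p. Complex (fst p) (snd p))) f"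
    by (simp add: lborel_complex[symmetric])
  also have "\<dots> \<longleftrightarrow> integrable (lborel \<Otimes>\<^sub>M lborel) (\<lambda>p. f (Complex (fst p) (snd p)))"
    by (rule integrable_distr_eq[OF mC fm])
  finally show ?thesis .
qed

lemma integrable_gaussC:
  fixes a :: real assumes a: "a > 0"
  shows "integrable lborel (\<lambda>w::complex. exp (- a * (cmod w)\<^sup>2))"
proof -
  have g: "integrable lborel (\<lambda>x. exp (- (a * x\<^sup>2)))" using integrable_gauss1[OF a] by simp
  have "integrable (lborel \<Otimes>\<^sub>M lborel) (\<lambda>p::real\<times>real. exp (- a * (fst p)\<^sup>2) * exp (- a * (snd p)\<^sup>2))"
  proof (rule lborel_pair.Fubini_integrable)
    show "(\<lambda>p::real\<times>real. exp (- a * (fst p)\<^sup>2) * exp (- a * (snd p)\<^sup>2)) \<in> borel_measurable (lborel \<Otimes>\<^sub>M lborel)"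
      by measurable
    show "integrable lborel (\<lambda>x. \<integral>y. norm (exp (- a * (fst (x, y))\<^sup>2) * exp (- a * (snd (x, y))\<^sup>2)) \<partial>lborel)"
      by (simp add: integrable_mult_left g)
    show "AE x in lborel. integrable lborel (\<lambda>y. exp (- a * (fst (x, y))\<^sup>2) * exp (- a * (snd (x, y))\<^sup>2))"
      by (simp add: integrable_mult_right g)
  qed
  moreover have "exp (- a * (cmod (Complex x y))\<^sup>2) = exp (- a * x\<^sup>2) * exp (- a * y\<^sup>2)" for x y
    by (simp add: cmod_power2 algebra_simps flip: exp_add)
  ultimately show ?thesis
    by (subst integrable_on_complex_iff) auto
qed

definition gc :: real where "gc = integral\<^sup>L lborel (\<lambda>w::complex. exp (- pi * (cmod w)\<^sup>2))"

lemma integrable_mu: "integrable lborel (\<lambda>w::complex. exp (- pi * (cmod w)\<^sup>2))"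
  by (rule integrable_gaussC) simp

lemma gc_pos: "gc > 0"
proof -
  have nn: "0 \<le> gc" unfolding gc_def by (rule integral_nonneg_AE) auto
  have "gc \<noteq> 0"
  proof
    assume "gc = 0"
    then have "AE w in lborel. exp (- pi * (cmod (w::complex))\<^sup>2) = 0"
      unfolding gc_def by (subst (asm) integral_nonneg_eq_0_iff_AE[OF integrable_mu]) auto
    then have "AE w in (lborel::complex measure). False" by simp
    then show False using ae_filter_eq_bot_iff[of "lborel :: complex measure"]
      by (simp add: eventually_False emeasure_lborel_UNIV)
  qed
  with nn show ?thesis by simp
qed

lemma circle_mean_HK:
  fixes h :: "complex \<Rightarrow> complex"
  assumes h: "h holomorphic_on UNIV"
  shows "((\<lambda>t. h (w * cis t)) has_integral (2 * complex_of_real pi * h 0)) {0..2*pi}"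
proof -
  have g: "(\<lambda>u. h (w * u)) holomorphic_on cball 0 1"
    by (intro holomorphic_on_compose_gen[OF _ h, unfolded o_def]) (auto intro!: holomorphic_intros)
  have "((\<lambda>u. h (w * u) / (u - 0)) has_contour_integral (2 * of_real pi * \<i> * h (w * 0))) (circlepath 0 1)"
    by (rule Cauchy_integral_circlepath_simple[OF g]) simp
  then have "((\<lambda>t. h (w * (0 + 1 * cis t)) / (0 + 1 * cis t - 0) * 1 * \<i> * cis t) has_integral (2 * of_real pi * \<i> * h 0)) {0..2*pi}"
    unfolding circlepath_def by (subst (asm) has_contour_integral_part_circlepath_iff) auto
  then have "((\<lambda>t. \<i> * h (w * cis t)) has_integral (2 * of_real pi * \<i> * h 0)) {0..2*pi}"
    by (rule has_integral_eq[rotated]) (simp add: cis_neq_zero)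
  then have "((\<lambda>t. (- \<i>) * (\<i> * h (w * cis t))) has_integral (- \<i>) * (2 * of_real pi * \<i> * h 0)) {0..2*pi}"
    by (rule has_integral_mult_right)
  moreover have "(- \<i>) * (2 * complex_of_real pi * \<i> * h 0) = 2 * complex_of_real pi * h 0"
    by (simp add: algebra_simps)
  moreover have "(\<lambda>t. (- \<i>) * (\<i> * h (w * cis t))) = (\<lambda>t. h (w * cis t))"
    by (simp add: algebra_simps)
  ultimately show ?thesis by (simp only:)
qed

lemma circle_mean:
  fixes h :: "complex \<Rightarrow> complex"
  assumes h: "h holomorphic_on UNIV"
  shows "set_integrable lborel {0..2*pi} (\<lambda>t. h (w * cis t))"
    and "(LINT t:{0..2*pi}|lborel. h (w * cis t)) = 2 * complex_of_real pi * h 0"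
proof -
  have c: "continuous_on {0..2*pi} (\<lambda>t. h (w * cis t))"
    by (intro continuous_on_compose2[OF holomorphic_on_imp_continuous_on[OF h]] continuous_intros) auto
  show si: "set_integrable lborel {0..2*pi} (\<lambda>t. h (w * cis t))"
    by (rule borel_integrable_atLeastAtMost'[OF c])
  have "(LINT t:{0..2*pi}|lborel. h (w * cis t)) = integral {0..2*pi} (\<lambda>t. h (w * cis t))"
    by (rule set_borel_integral_eq_integral(2)[OF si])
  also have "\<dots> = 2 * complex_of_real pi * h 0" by (rule integral_unique[OF circle_mean_HK[OF h]])
  finally show "(LINT t:{0..2*pi}|lborel. h (w * cis t)) = 2 * complex_of_real pi * h 0" .
qed

abbreviation mu :: "complex \<Rightarrow> complex" where
  "mu w \<equiv> complex_of_real (exp (- pi * (cmod w)\<^sup>2))"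

lemma mean_value_gauss:
  fixes h :: "complex \<Rightarrow> complex"
  assumes h: "h holomorphic_on UNIV" and int: "integrable lborel (\<lambda>w. h w * mu w)"
  shows "(\<integral>w. h w * mu w \<partial>lborel) = complex_of_real gc * h 0"
proof -
  define F where "F = (\<lambda>w. h w * mu w)"
  have Fc: "continuous_on UNIV F" unfolding F_def
    by (intro continuous_intros holomorphic_on_imp_continuous_on[OF h])
  have Fm: "F \<in> borel_measurable borel" using Fc by (rule borel_measurable_continuous_onI)
  have intF: "integrable lborel F" using int unfolding F_def .
  have Frot: "F (cis t * w) = h (w * cis t) * mu w" for t w
    unfolding F_def by (simp add: norm_mult mult.commute)
  have rot: "(\<integral>w. F (cis t * w) \<partial>lborel) = integral\<^sup>L lborel F" for t
    by (rule integral_rotation[OF _ Fm]) simp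
  have rotn: "(\<integral>w. norm (F (cis t * w)) \<partial>lborel) = (\<integral>w. norm (F w) \<partial>lborel)" for t
    by (rule integral_rotation[of _ "\<lambda>w. norm (F w)"]) (use Fm in auto)
  define \<Phi> where "\<Phi> = (\<lambda>p::real \<times> complex. indicator {0..2*pi} (fst p) *\<^sub>R F (cis (fst p) * snd p))"
  have \<Phi>c: "continuous_on UNIV (\<lambda>p::real \<times> complex. F (cis (fst p) * snd p))"
    by (intro continuous_on_compose2[OF Fc] continuous_intros) auto
  have \<Phi>m: "\<Phi> \<in> borel_measurable (lborel \<Otimes>\<^sub>M lborel)"
  proof -
    have "(\<lambda>p::real \<times> complex. F (cis (fst p) * snd p)) \<in> borel_measurable borel"
      using \<Phi>c by (rule borel_measurable_continuous_onI)
    then have [measurable]: "(\<lambda>p::real \<times> complex. F (cis (fst p) * snd p)) \<in> borel_measurable (lborel \<Otimes>\<^sub>M lborel)"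
      by (simp add: measurable_lborel1 lborel_prod)
    show ?thesis unfolding \<Phi>_def by measurable
  qed
  have ind: "integrable lborel (indicator {0..2*pi} :: real \<Rightarrow> real)"
    by (simp add: integrable_indicator_iff emeasure_lborel_Icc)
  have intind: "(\<integral>t. indicator {0..2*pi} t \<partial>lborel) = 2 * pi"
    by simp
  have \<Phi>int: "integrable (lborel \<Otimes>\<^sub>M lborel) \<Phi>"
  proof (rule lborel_pair.Fubini_integrable[OF \<Phi>m])
    have "(\<lambda>t. \<integral>w. norm (\<Phi> (t, w)) \<partial>lborel) = (\<lambda>t. indicator {0..2*pi} t * (\<integral>w. norm (F w) \<partial>lborel))"
    proof
      fix t :: real
      have "(\<integral>w. norm (\<Phi> (t, w)) \<partial>lborel) = (\<integral>w. indicator {0..2*pi} t * norm (F (cis t * w)) \<partial>lborel)"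
        unfolding \<Phi>_def by (simp add: indicator_def)
      also have "\<dots> = indicator {0..2*pi} t * (\<integral>w. norm (F w) \<partial>lborel)"
        by (simp add: rotn)
      finally show "(\<integral>w. norm (\<Phi> (t, w)) \<partial>lborel) = indicator {0..2*pi} t * (\<integral>w. norm (F w) \<partial>lborel)" .
    qed
    then show "integrable lborel (\<lambda>t. \<integral>w. norm (\<Phi> (t, w)) \<partial>lborel)"
      using ind by (simp add: integrable_mult_left)
    show "AE t in lborel. integrable lborel (\<lambda>w. \<Phi> (t, w))"
      unfolding \<Phi>_def by (auto intro!: integrable_scaleR_right integrable_rotation[OF _ intF])
  qed
  have "(\<integral>t. (\<integral>w. \<Phi> (t, w) \<partial>lborel) \<partial>lborel) = integral\<^sup>L (lborel \<Otimes>\<^sub>M lborel) \<Phi>"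
    by (rule lborel_pair.integral_fst'[OF \<Phi>int])
  moreover have "(\<integral>t. (\<integral>w. \<Phi> (t, w) \<partial>lborel) \<partial>lborel) = complex_of_real (2 * pi) * integral\<^sup>L lborel F"
  proof -
    have "(\<integral>t. (\<integral>w. \<Phi> (t, w) \<partial>lborel) \<partial>lborel) = (\<integral>t. indicator {0..2*pi} t *\<^sub>R integral\<^sup>L lborel F \<partial>lborel)"
      unfolding \<Phi>_def by (simp add: rot)
    also have "\<dots> = (\<integral>t. indicator {0..2*pi} t \<partial>lborel) *\<^sub>R integral\<^sup>L lborel F"
      using ind by simp
    finally show ?thesis by (simp add: scaleR_conv_of_real)
  qed
  moreover have "(\<integral>w. (\<integral>t. \<Phi> (t, w) \<partial>lborel) \<partial>lborel) = integral\<^sup>L (lborel \<Otimes>\<^sub>M lborel) \<Phi>"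
    using lborel_pair.integral_snd[of "\<lambda>t w. \<Phi> (t, w)"] \<Phi>int by (simp add: case_prod_unfold)
  moreover have "(\<integral>w. (\<integral>t. \<Phi> (t, w) \<partial>lborel) \<partial>lborel) = complex_of_real (2 * pi) * (complex_of_real gc * h 0)"
  proof -
    have "(\<integral>t. \<Phi> (t, w) \<partial>lborel) = (complex_of_real (2 * pi) * h 0) * mu w" for w
    proof -
      have "(\<integral>t. \<Phi> (t, w) \<partial>lborel) = (\<integral>t. (indicator {0..2*pi} t *\<^sub>R h (w * cis t)) * mu w \<partial>lborel)"
        unfolding \<Phi>_def Frot by (intro Bochner_Integration.integral_cong) (auto simp: indicator_def simp del: of_real_exp)
      also have "\<dots> = (LINT t:{0..2*pi}|lborel. h (w * cis t)) * mu w"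
        using circle_mean(1)[OF h, of w] unfolding set_lebesgue_integral_def set_integrable_def
        by (intro Bochner_Integration.integral_mult_left) auto
      also have "\<dots> = (complex_of_real (2 * pi) * h 0) * mu w"
        using circle_mean(2)[OF h, of w] by simp
      finally show ?thesis .
    qed
    then have "(\<integral>w. (\<integral>t. \<Phi> (t, w) \<partial>lborel) \<partial>lborel) = (\<integral>w. (complex_of_real (2 * pi) * h 0) * mu w \<partial>lborel)"
      by simp
    also have "\<dots> = (complex_of_real (2 * pi) * h 0) * complex_of_real gc"
      unfolding gc_def by simp
    finally show ?thesis by simp
  qed
  ultimately have "complex_of_real (2 * pi) * integral\<^sup>L lborel F = complex_of_real (2 * pi) * (complex_of_real gc * h 0)"
    by simp
  then show ?thesis unfolding F_def by simp
qed



definition Nrm :: "(complex \<Rightarrow> complex) \<Rightarrow> real" where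
  "Nrm f = (\<integral>w. (cmod (f w))\<^sup>2 * exp (- pi * (cmod w)\<^sup>2) \<partial>lborel)"

lemma Nrm_nonneg: "Nrm f \<ge> 0"
  unfolding Nrm_def by (rule integral_nonneg_AE) auto

lemma fock_spaceD:
  assumes "f \<in> fock_space"
  shows "f holomorphic_on UNIV" "integrable lborel (\<lambda>w. (cmod (f w))\<^sup>2 * exp (- pi * (cmod w)\<^sup>2))"
    "continuous_on UNIV f" "f \<in> borel_measurable borel"
  using assms unfolding fock_space_def
  by (auto intro: holomorphic_on_imp_continuous_on borel_measurable_continuous_onI)

lemma inner_self: "fock_inner f f = complex_of_real (Nrm f)"
proof -
  have "(\<lambda>w. f w * cnj (f w) * mu w) = (\<lambda>w. complex_of_real ((cmod (f w))\<^sup>2 * exp (- pi * (cmod w)\<^sup>2)))"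
    by (simp add: complex_norm_square[symmetric] del: of_real_exp)
  then show ?thesis unfolding fock_inner_def Nrm_def by (simp only: integral_complex_of_real)
qed

lemma fock_norm_Nrm: "fock_norm f = sqrt (Nrm f)"
  unfolding fock_norm_def inner_self by simp

lemma fock_norm_nonneg: "fock_norm f \<ge> 0"
  unfolding fock_norm_Nrm using Nrm_nonneg[of f] by simp

lemma Nrm_fock_norm: "Nrm f = (fock_norm f)\<^sup>2"
  unfolding fock_norm_Nrm using Nrm_nonneg[of f] by simp

lemma prod_le_amgm:
  fixes a b s :: real assumes "s > 0"
  shows "a * b \<le> (s * a\<^sup>2 + b\<^sup>2 / s) / 2"
proof -
  have "0 \<le> (s * a - b)\<^sup>2 / s" using assms by simp
  also have "(s * a - b)\<^sup>2 / s = s * a\<^sup>2 - 2 * a * b + b\<^sup>2 / s"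
    using assms by (simp add: power2_eq_square field_simps)
  finally show ?thesis by simp
qed

lemma sqrt_bound_from_amgm:
  fixes X A B :: real
  assumes A: "A \<ge> 0" and B: "B \<ge> 0" and X: "\<And>s. s > 0 \<Longrightarrow> X \<le> (s * A + B / s) / 2"
  shows "X \<le> sqrt A * sqrt B"
proof (cases "A > 0 \<and> B > 0")
  case True
  define s where "s = sqrt B / sqrt A"
  have s: "s > 0" using True by (simp add: s_def)
  have "s * A = sqrt A * sqrt B"
    using True by (simp add: s_def field_simps)
  moreover have "B / s = sqrt A * sqrt B"
    using True by (simp add: s_def field_simps)
  ultimately show ?thesis using X[OF s] by simp
next
  case False
  then have "A = 0 \<or> B = 0" using A B by auto
  then show ?thesis
  proof
    assume A0: "A = 0"
    show ?thesis
    proof (rule ccontr)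
      assume "\<not> ?thesis"
      then have Xp: "X > 0" using A0 by simp
      define s where "s = (B + 1) / X"
      have s: "s > 0" using Xp B by (simp add: s_def)
      have BX: "B * X \<ge> 0" using Xp B by simp
      have "X \<le> B / s / 2" using X[OF s] A0 by simp
      also have "\<dots> = B * X / ((B + 1) * 2)" by (simp add: s_def)
      also have "\<dots> < X"
      proof -
        have "B * X < (B + 1) * 2 * X" using Xp B by (simp add: algebra_simps) (use BX in linarith)
        then show ?thesis using B by (simp add: divide_less_eq mult.commute)
      qed
      finally show False by simp
    qed
  next
    assume B0: "B = 0"
    show ?thesis
    proof (rule ccontr)
      assume "\<not> ?thesis"
      then have Xp: "X > 0" using B0 by simp
      define s where "s = X / (A + 1)"
      have s: "s > 0" using Xp A by (simp add: s_def)
      have AX: "X * A \<ge> 0" using Xp A by simp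
      have "X \<le> s * A / 2" using X[OF s] B0 by simp
      also have "\<dots> = X * A / ((A + 1) * 2)" by (simp add: s_def)
      also have "\<dots> < X"
      proof -
        have "A < (A + 1) * 2" using A by simp
        then have "A * X < (A + 1) * 2 * X" using Xp by (rule mult_strict_right_mono)
        then have "X * A < (A + 1) * 2 * X" by (simp add: mult.commute)
        then show ?thesis using A by (simp add: divide_less_eq mult.commute)
      qed
      finally show False by simp
    qed
  qed
qed

lemma L2_prod_integrable:
  assumes f: "f \<in> fock_space" and g: "g \<in> fock_space"
  shows "integrable lborel (\<lambda>w. cmod (f w) * cmod (g w) * exp (- pi * (cmod w)\<^sup>2))"
    and "integrable lborel (\<lambda>w. f w * cnj (g w) * mu w)"
proof -
  note fD = fock_spaceD[OF f] and gD = fock_spaceD[OF g]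
  have sumint: "integrable lborel (\<lambda>w. ((cmod (f w))\<^sup>2 * exp (- pi * (cmod w)\<^sup>2) + (cmod (g w))\<^sup>2 * exp (- pi * (cmod w)\<^sup>2)) / 2)"
    using fD(2) gD(2) by (intro integrable_divide Bochner_Integration.integrable_add)
  have bnd: "cmod (f w) * cmod (g w) * exp (- pi * (cmod w)\<^sup>2) \<le> ((cmod (f w))\<^sup>2 * exp (- pi * (cmod w)\<^sup>2) + (cmod (g w))\<^sup>2 * exp (- pi * (cmod w)\<^sup>2)) / 2" for w
  proof -
    have "cmod (f w) * cmod (g w) \<le> ((cmod (f w))\<^sup>2 + (cmod (g w))\<^sup>2) / 2"
      using prod_le_amgm[of 1 "cmod (f w)" "cmod (g w)"] by simp
    then have "cmod (f w) * cmod (g w) * exp (- pi * (cmod w)\<^sup>2) \<le> ((cmod (f w))\<^sup>2 + (cmod (g w))\<^sup>2) / 2 * exp (- pi * (cmod w)\<^sup>2)"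
      by (rule mult_right_mono) simp
    then show ?thesis by (simp add: field_simps)
  qed
  show i1: "integrable lborel (\<lambda>w. cmod (f w) * cmod (g w) * exp (- pi * (cmod w)\<^sup>2))"
  proof (rule Bochner_Integration.integrable_bound[OF sumint])
    show "(\<lambda>w. cmod (f w) * cmod (g w) * exp (- pi * (cmod w)\<^sup>2)) \<in> borel_measurable lborel"
      using fD(4) gD(4) by measurable
    show "AE w in lborel. norm (cmod (f w) * cmod (g w) * exp (- pi * (cmod w)\<^sup>2)) \<le> norm (((cmod (f w))\<^sup>2 * exp (- pi * (cmod w)\<^sup>2) + (cmod (g w))\<^sup>2 * exp (- pi * (cmod w)\<^sup>2)) / 2)"
      using bnd by (auto simp: abs_mult intro!: order_trans[OF _ abs_ge_self])
  qed
  show "integrable lborel (\<lambda>w. f w * cnj (g w) * mu w)"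
  proof (rule Bochner_Integration.integrable_bound[OF i1])
    have "continuous_on UNIV (\<lambda>w. f w * cnj (g w) * mu w)"
      using fD(3) gD(3) by (intro continuous_intros) auto
    then show "(\<lambda>w. f w * cnj (g w) * mu w) \<in> borel_measurable lborel"
      by (simp add: measurable_lborel1 borel_measurable_continuous_onI)
    show "AE w in lborel. norm (f w * cnj (g w) * mu w) \<le> norm (cmod (f w) * cmod (g w) * exp (- pi * (cmod w)\<^sup>2))"
      by (auto simp: norm_mult)
  qed
qed

lemma fock_CS_abs:
  assumes f: "f \<in> fock_space" and g: "g \<in> fock_space"
  shows "(\<integral>w. cmod (f w) * cmod (g w) * exp (- pi * (cmod w)\<^sup>2) \<partial>lborel) \<le> fock_norm f * fock_norm g"
proof -
  note fD = fock_spaceD[OF f] and gD = fock_spaceD[OF g]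
  note i = L2_prod_integrable[OF f g]
  define X where "X = (\<integral>w. cmod (f w) * cmod (g w) * exp (- pi * (cmod w)\<^sup>2) \<partial>lborel)"
  have "X \<le> sqrt (Nrm f) * sqrt (Nrm g)"
  proof (rule sqrt_bound_from_amgm[OF Nrm_nonneg Nrm_nonneg])
    fix s :: real assume s: "s > 0"
    have "X \<le> (\<integral>w. (s * ((cmod (f w))\<^sup>2 * exp (- pi * (cmod w)\<^sup>2)) + ((cmod (g w))\<^sup>2 * exp (- pi * (cmod w)\<^sup>2)) / s) / 2 \<partial>lborel)"
      unfolding X_def
    proof (rule integral_mono)
      show "integrable lborel (\<lambda>w. (s * ((cmod (f w))\<^sup>2 * exp (- pi * (cmod w)\<^sup>2)) + ((cmod (g w))\<^sup>2 * exp (- pi * (cmod w)\<^sup>2)) / s) / 2)"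
        using fD(2) gD(2) by (intro integrable_divide Bochner_Integration.integrable_add integrable_mult_right) auto
      fix w
      have "cmod (f w) * cmod (g w) \<le> (s * (cmod (f w))\<^sup>2 + (cmod (g w))\<^sup>2 / s) / 2"
        by (rule prod_le_amgm[OF s])
      then have "cmod (f w) * cmod (g w) * exp (- pi * (cmod w)\<^sup>2) \<le> (s * (cmod (f w))\<^sup>2 + (cmod (g w))\<^sup>2 / s) / 2 * exp (- pi * (cmod w)\<^sup>2)"
        by (rule mult_right_mono) simp
      then show "cmod (f w) * cmod (g w) * exp (- pi * (cmod w)\<^sup>2) \<le> (s * ((cmod (f w))\<^sup>2 * exp (- pi * (cmod w)\<^sup>2)) + ((cmod (g w))\<^sup>2 * exp (- pi * (cmod w)\<^sup>2)) / s) / 2"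
        by (simp add: field_simps)
    qed (rule i(1))
    also have "\<dots> = (s * Nrm f + Nrm g / s) / 2"
      unfolding Nrm_def using fD(2) gD(2) by simp
    finally show "X \<le> (s * Nrm f + Nrm g / s) / 2" .
  qed
  then show ?thesis unfolding fock_norm_Nrm X_def .
qed

lemma fock_CS:
  assumes f: "f \<in> fock_space" and g: "g \<in> fock_space"
  shows "cmod (fock_inner f g) \<le> fock_norm f * fock_norm g"
proof -
  have "cmod (fock_inner f g) \<le> (\<integral>w. norm (f w * cnj (g w) * mu w) \<partial>lborel)"
    unfolding fock_inner_def by (rule integral_norm_bound)
  also have "\<dots> = (\<integral>w. cmod (f w) * cmod (g w) * exp (- pi * (cmod w)\<^sup>2) \<partial>lborel)" by (simp add: norm_mult)
  also have "\<dots> \<le> fock_norm f * fock_norm g" by (rule fock_CS_abs[OF f g])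
  finally show ?thesis .
qed

lemma inner_lin:
  assumes f: "f \<in> fock_space" and g: "g \<in> fock_space" and e: "e \<in> fock_space"
  shows "fock_inner (\<lambda>w. a * f w + b * g w) e = a * fock_inner f e + b * fock_inner g e"
proof -
  note i1 = L2_prod_integrable(2)[OF f e] and i2 = L2_prod_integrable(2)[OF g e]
  have "(\<lambda>w. (a * f w + b * g w) * cnj (e w) * mu w) = (\<lambda>w. a * (f w * cnj (e w) * mu w) + b * (g w * cnj (e w) * mu w))"
    by (simp add: algebra_simps)
  then show ?thesis unfolding fock_inner_def
    using i1 i2 by (simp add: Bochner_Integration.integral_add integrable_mult_right)
qed

lemma inner_scale: "fock_inner (\<lambda>w. a * f w) e = a * fock_inner f e"
proof -
  have "(\<lambda>w. a * f w * cnj (e w) * mu w) = (\<lambda>w. a * (f w * cnj (e w) * mu w))"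
    by (simp add: algebra_simps)
  then show ?thesis unfolding fock_inner_def by simp
qed

lemma inner_scale_right: "fock_inner f (\<lambda>w. a * e w) = cnj a * fock_inner f e"
proof -
  have "(\<lambda>w. f w * cnj (a * e w) * mu w) = (\<lambda>w. cnj a * (f w * cnj (e w) * mu w))"
    by (simp add: algebra_simps)
  then show ?thesis unfolding fock_inner_def by simp
qed

lemma inner_cnj: "fock_inner g f = cnj (fock_inner f g)"
proof -
  have "fock_inner g f = (\<integral>w. cnj (f w * cnj (g w) * mu w) \<partial>lborel)"
    unfolding fock_inner_def by (rule Bochner_Integration.integral_cong) (simp_all add: algebra_simps del: of_real_exp)
  also have "\<dots> = cnj (fock_inner f g)" unfolding fock_inner_def by (rule Bochner_Integration.integral_cnj)
  finally show ?thesis .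
qed

lemma norm_lin_sq_bound:
  fixes a b x y :: complex
  shows "(cmod (a * x + b * y))\<^sup>2 \<le> 2 * (cmod a)\<^sup>2 * (cmod x)\<^sup>2 + 2 * (cmod b)\<^sup>2 * (cmod y)\<^sup>2"
proof -
  have "cmod (a * x + b * y) \<le> cmod a * cmod x + cmod b * cmod y"
    by (metis norm_mult norm_triangle_ineq)
  then have "(cmod (a * x + b * y))\<^sup>2 \<le> (cmod a * cmod x + cmod b * cmod y)\<^sup>2"
    by (simp add: power_mono)
  also have "\<dots> \<le> 2 * (cmod a * cmod x)\<^sup>2 + 2 * (cmod b * cmod y)\<^sup>2"
    using prod_le_amgm[of 1 "cmod a * cmod x" "cmod b * cmod y"] by (simp add: power2_eq_square algebra_simps)
  finally show ?thesis by (simp add: power_mult_distrib)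
qed

lemma fock_lin:
  assumes f: "f \<in> fock_space" and g: "g \<in> fock_space"
  shows "(\<lambda>w. a * f w + b * g w) \<in> fock_space"
    and "Nrm (\<lambda>w. a * f w + b * g w) \<le> 2 * (cmod a)\<^sup>2 * Nrm f + 2 * (cmod b)\<^sup>2 * Nrm g"
proof -
  note fD = fock_spaceD[OF f] and gD = fock_spaceD[OF g]
  have bint: "integrable lborel (\<lambda>w. 2 * (cmod a)\<^sup>2 * ((cmod (f w))\<^sup>2 * exp (- pi * (cmod w)\<^sup>2)) + 2 * (cmod b)\<^sup>2 * ((cmod (g w))\<^sup>2 * exp (- pi * (cmod w)\<^sup>2)))"
    using fD(2) gD(2) by (intro Bochner_Integration.integrable_add integrable_mult_right)
  have bnd: "(cmod (a * f w + b * g w))\<^sup>2 * exp (- pi * (cmod w)\<^sup>2) \<le> 2 * (cmod a)\<^sup>2 * ((cmod (f w))\<^sup>2 * exp (- pi * (cmod w)\<^sup>2)) + 2 * (cmod b)\<^sup>2 * ((cmod (g w))\<^sup>2 * exp (- pi * (cmod w)\<^sup>2))" for w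
  proof -
    have "(cmod (a * f w + b * g w))\<^sup>2 * exp (- pi * (cmod w)\<^sup>2) \<le> (2 * (cmod a)\<^sup>2 * (cmod (f w))\<^sup>2 + 2 * (cmod b)\<^sup>2 * (cmod (g w))\<^sup>2) * exp (- pi * (cmod w)\<^sup>2)"
      by (rule mult_right_mono[OF norm_lin_sq_bound]) simp
    then show ?thesis by (simp add: algebra_simps)
  qed
  have cont: "continuous_on UNIV (\<lambda>w. a * f w + b * g w)"
    using fD(3) gD(3) by (intro continuous_intros) auto
  have meas: "(\<lambda>w. (cmod (a * f w + b * g w))\<^sup>2 * exp (- pi * (cmod w)\<^sup>2)) \<in> borel_measurable lborel"
  proof -
    have "continuous_on UNIV (\<lambda>w. (cmod (a * f w + b * g w))\<^sup>2 * exp (- pi * (cmod w)\<^sup>2))"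
      using cont fD(3) gD(3) by (intro continuous_intros) auto
    then show ?thesis by (simp add: measurable_lborel1 borel_measurable_continuous_onI)
  qed
  have int: "integrable lborel (\<lambda>w. (cmod (a * f w + b * g w))\<^sup>2 * exp (- pi * (cmod w)\<^sup>2))"
    by (rule Bochner_Integration.integrable_bound[OF bint meas]) (use bnd in \<open>auto intro!: order_trans[OF _ abs_ge_self]\<close>)
  show "(\<lambda>w. a * f w + b * g w) \<in> fock_space"
    unfolding fock_space_def using fD(1) gD(1) int by (auto intro!: holomorphic_intros)
  have "Nrm (\<lambda>w. a * f w + b * g w) \<le> (\<integral>w. 2 * (cmod a)\<^sup>2 * ((cmod (f w))\<^sup>2 * exp (- pi * (cmod w)\<^sup>2)) + 2 * (cmod b)\<^sup>2 * ((cmod (g w))\<^sup>2 * exp (- pi * (cmod w)\<^sup>2)) \<partial>lborel)"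
    unfolding Nrm_def by (rule integral_mono[OF int bint bnd])
  also have "\<dots> = 2 * (cmod a)\<^sup>2 * Nrm f + 2 * (cmod b)\<^sup>2 * Nrm g"
    unfolding Nrm_def using fD(2) gD(2) by (simp add: Bochner_Integration.integral_add integrable_mult_right)
  finally show "Nrm (\<lambda>w. a * f w + b * g w) \<le> 2 * (cmod a)\<^sup>2 * Nrm f + 2 * (cmod b)\<^sup>2 * Nrm g" .
qed

lemma fock_scale:
  assumes f: "f \<in> fock_space"
  shows "(\<lambda>w. a * f w) \<in> fock_space"
  using fock_lin(1)[OF f f, of a 0] by simp

lemma Nrm_scale: "Nrm (\<lambda>w. a * f w) = (cmod a)\<^sup>2 * Nrm f"
proof -
  have "(\<lambda>w. (cmod (a * f w))\<^sup>2 * exp (- pi * (cmod w)\<^sup>2)) = (\<lambda>w. (cmod a)\<^sup>2 * ((cmod (f w))\<^sup>2 * exp (- pi * (cmod w)\<^sup>2)))"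
    by (simp add: norm_mult power_mult_distrib mult.assoc)
  then show ?thesis unfolding Nrm_def by simp
qed

lemma fock_norm_scale: "fock_norm (\<lambda>w. a * f w) = cmod a * fock_norm f"
  unfolding fock_norm_Nrm Nrm_scale by (simp add: real_sqrt_mult)

lemma fock_zero: "(\<lambda>w. 0) \<in> fock_space"
  unfolding fock_space_def by auto



lemma pow_le_exp:
  fixes x :: real assumes x: "x \<ge> 0"
  shows "x ^ n \<le> (real n) ^ n * exp x"
proof (cases "n = 0")
  case True then show ?thesis using x by simp
next
  case False
  then have n: "real n > 0" by simp
  have "(x / real n) ^ n \<le> (1 + x / real n) ^ n"
    using x n by (intro power_mono) auto
  also have "\<dots> \<le> exp x"
    using x False by (intro exp_ge_one_plus_x_over_n_power_n) auto
  finally have "x ^ n / (real n) ^ n \<le> exp x" by (simp add: power_divide)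
  then show ?thesis using n by (simp add: field_simps)
qed

lemma fock_basis_in: "fock_basis j \<in> fock_space"
proof -
  define C where "C = (pi ^ j / fact j) * (2 * real j / pi) ^ j"
  have eq: "(cmod (fock_basis j w))\<^sup>2 * exp (- pi * (cmod w)\<^sup>2) = (pi ^ j / fact j) * (((cmod w)\<^sup>2) ^ j * exp (- pi * (cmod w)\<^sup>2))" for w
    by (simp add: fock_basis_def norm_mult norm_power power_mult_distrib power_mult[symmetric] mult.commute)
  have bnd: "((cmod w)\<^sup>2) ^ j * exp (- pi * (cmod w)\<^sup>2) \<le> (2 * real j / pi) ^ j * exp (- (pi / 2) * (cmod w)\<^sup>2)" for w
  proof -
    define s where "s = (cmod w)\<^sup>2"
    have s: "s \<ge> 0" by (simp add: s_def)
    have "(pi / 2 * s) ^ j \<le> (real j) ^ j * exp (pi / 2 * s)"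
      using s by (intro pow_le_exp) simp
    then have "s ^ j \<le> (2 / pi) ^ j * (real j) ^ j * exp (pi / 2 * s)"
      by (simp add: power_mult_distrib field_simps)
    then have "s ^ j * exp (- pi * s) \<le> (2 / pi) ^ j * (real j) ^ j * exp (pi / 2 * s) * exp (- pi * s)"
      by (rule mult_right_mono) simp
    also have "\<dots> = (2 / pi) ^ j * (real j) ^ j * (exp (pi / 2 * s) * exp (- pi * s))"
      by (simp add: mult.assoc)
    also have "exp (pi / 2 * s) * exp (- pi * s) = exp (- (pi / 2) * s)"
      by (simp add: exp_add[symmetric])
    also have "(2 / pi) ^ j * (real j) ^ j = (2 * real j / pi) ^ j"
      by (simp add: power_mult_distrib[symmetric])
    finally show ?thesis unfolding s_def .
  qed
  have int: "integrable lborel (\<lambda>w::complex. (2 * real j / pi) ^ j * exp (- (pi / 2) * (cmod w)\<^sup>2))"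
    by (intro integrable_mult_right integrable_gaussC) simp
  have cont: "continuous_on UNIV (\<lambda>w. ((cmod w)\<^sup>2) ^ j * exp (- pi * (cmod w)\<^sup>2))"
    by (intro continuous_intros)
  have int2: "integrable lborel (\<lambda>w::complex. ((cmod w)\<^sup>2) ^ j * exp (- pi * (cmod w)\<^sup>2))"
  proof (rule Bochner_Integration.integrable_bound[OF int])
    show "(\<lambda>w::complex. ((cmod w)\<^sup>2) ^ j * exp (- pi * (cmod w)\<^sup>2)) \<in> borel_measurable lborel"
      using cont by (simp add: measurable_lborel1 borel_measurable_continuous_onI)
    show "AE w in lborel. norm (((cmod w)\<^sup>2) ^ j * exp (- pi * (cmod w)\<^sup>2)) \<le> norm ((2 * real j / pi) ^ j * exp (- (pi / 2) * (cmod (w::complex))\<^sup>2))"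
      using bnd by (auto intro!: order_trans[OF _ abs_ge_self])
  qed
  have "integrable lborel (\<lambda>w. (cmod (fock_basis j w))\<^sup>2 * exp (- pi * (cmod w)\<^sup>2))"
    unfolding eq by (intro integrable_mult_right int2)
  moreover have "fock_basis j holomorphic_on UNIV"
    unfolding fock_basis_def by (intro holomorphic_intros)
  ultimately show ?thesis unfolding fock_space_def by simp
qed

lemma kernel_sq:
  "(cmod (fock_kernel z w))\<^sup>2 * exp (- pi * (cmod w)\<^sup>2) = exp (- pi * (cmod (w - z))\<^sup>2)"
proof -
  have "(cmod (fock_kernel z w))\<^sup>2 = exp (2 * Re (complex_of_real pi * cnj z * w - complex_of_real (pi * (cmod z)\<^sup>2 / 2)))"
    unfolding fock_kernel_def by (simp add: power2_eq_square exp_add[symmetric])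
  also have "\<dots> = exp (2 * pi * (Re z * Re w + Im z * Im w) - pi * (cmod z)\<^sup>2)"
    by (simp add: algebra_simps)
  finally have "(cmod (fock_kernel z w))\<^sup>2 * exp (- pi * (cmod w)\<^sup>2) = exp (2 * pi * (Re z * Re w + Im z * Im w) - pi * (cmod z)\<^sup>2 - pi * (cmod w)\<^sup>2)"
    by (simp add: exp_add[symmetric] exp_diff)
  also have "2 * pi * (Re z * Re w + Im z * Im w) - pi * (cmod z)\<^sup>2 - pi * (cmod w)\<^sup>2 = - pi * (cmod (w - z))\<^sup>2"
    unfolding cmod_power2 by (simp add: power2_eq_square algebra_simps)
  finally show ?thesis .
qed

lemma kernel_holo: "fock_kernel z holomorphic_on UNIV"
  unfolding fock_kernel_def by (intro holomorphic_intros)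

lemma kernel_in: "fock_kernel z \<in> fock_space"
  and Nrm_kernel: "Nrm (fock_kernel z) = gc"
proof -
  have m: "(\<lambda>w::complex. exp (- pi * (cmod w)\<^sup>2)) \<in> borel_measurable borel" by measurable
  have "integrable lborel (\<lambda>w. exp (- pi * (cmod (- z + w))\<^sup>2))"
    by (rule integrable_translate[OF integrable_mu])
  then have i: "integrable lborel (\<lambda>w. (cmod (fock_kernel z w))\<^sup>2 * exp (- pi * (cmod w)\<^sup>2))"
    unfolding kernel_sq by simp
  show "fock_kernel z \<in> fock_space" unfolding fock_space_def using i kernel_holo by auto
  have "Nrm (fock_kernel z) = (\<integral>w. exp (- pi * (cmod (- z + w))\<^sup>2) \<partial>lborel)"
    unfolding Nrm_def kernel_sq by simp
  also have "\<dots> = gc" unfolding gc_def by (rule integral_translate[OF m])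
  finally show "Nrm (fock_kernel z) = gc" .
qed

lemma mu_exp: "mu w = exp (- complex_of_real pi * (w * cnj w))"
proof -
  have "mu w = exp (complex_of_real (- pi * (cmod w)\<^sup>2))" by (simp only: of_real_exp)
  also have "complex_of_real (- pi * (cmod w)\<^sup>2) = - complex_of_real pi * (w * cnj w)"
    by (simp add: complex_norm_square[symmetric])
  finally show ?thesis .
qed

lemma kernel_shift_identity:
  "cnj (fock_kernel z (z + u)) * mu (z + u) =
     exp (- complex_of_real pi * cnj z * u) * mu u * complex_of_real (exp (- pi * (cmod z)\<^sup>2 / 2))"
proof -
  have e1: "cnj (fock_kernel z (z + u)) = exp (complex_of_real pi * z * (cnj z + cnj u) - complex_of_real pi * (z * cnj z) / 2)"
    unfolding fock_kernel_def by (simp add: exp_cnj complex_norm_square[symmetric])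
  have e3: "complex_of_real (exp (- pi * (cmod z)\<^sup>2 / 2)) = exp (- complex_of_real pi * (z * cnj z) / 2)"
  proof -
    have "complex_of_real (exp (- pi * (cmod z)\<^sup>2 / 2)) = exp (complex_of_real (- pi * (cmod z)\<^sup>2 / 2))" by (simp only: of_real_exp)
    also have "complex_of_real (- pi * (cmod z)\<^sup>2 / 2) = - complex_of_real pi * (z * cnj z) / 2"
      by (simp add: complex_norm_square[symmetric])
    finally show ?thesis .
  qed
  have "cnj (fock_kernel z (z + u)) * mu (z + u) =
     exp (complex_of_real pi * z * (cnj z + cnj u) - complex_of_real pi * (z * cnj z) / 2 + (- complex_of_real pi * ((z + u) * cnj (z + u))))"
    unfolding e1 mu_exp by (simp only: exp_add)
  also have "complex_of_real pi * z * (cnj z + cnj u) - complex_of_real pi * (z * cnj z) / 2 + (- complex_of_real pi * ((z + u) * cnj (z + u)))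
      = - complex_of_real pi * cnj z * u + - complex_of_real pi * (u * cnj u) + - complex_of_real pi * (z * cnj z) / 2"
    by (simp add: algebra_simps)
  also have "exp \<dots> = exp (- complex_of_real pi * cnj z * u) * mu u * complex_of_real (exp (- pi * (cmod z)\<^sup>2 / 2))"
    unfolding e3 mu_exp by (simp only: exp_add)
  finally show ?thesis .
qed

lemma reproducing:
  assumes f: "f \<in> fock_space"
  shows "fock_inner f (fock_kernel z) = complex_of_real gc * f z * complex_of_real (exp (- pi * (cmod z)\<^sup>2 / 2))"
proof -
  note fD = fock_spaceD[OF f]
  define E where "E = complex_of_real (exp (- pi * (cmod z)\<^sup>2 / 2))"
  have E0: "E \<noteq> 0" unfolding E_def by simp
  define F where "F = (\<lambda>w. f w * cnj (fock_kernel z w) * mu w)"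
  define h where "h = (\<lambda>u. f (z + u) * exp (- complex_of_real pi * cnj z * u))"
  have Fint: "integrable lborel F" unfolding F_def by (rule L2_prod_integrable(2)[OF f kernel_in])
  have Fm: "F \<in> borel_measurable borel" using borel_measurable_integrable[OF Fint] by simp
  have Fs: "F (z + u) = (h u * mu u) * E" for u
    unfolding F_def h_def E_def using kernel_shift_identity[of z u] by (simp add: mult.assoc)
  have hh: "h holomorphic_on UNIV"
  proof -
    have "(\<lambda>u. f (z + u)) holomorphic_on UNIV"
      by (rule holomorphic_on_compose_gen[OF _ fD(1), unfolded o_def]) (auto intro!: holomorphic_intros)
    then show ?thesis unfolding h_def by (intro holomorphic_intros)
  qed
  have "integrable lborel (\<lambda>u. F (z + u))" by (rule integrable_translate[OF Fint])
  then have "integrable lborel (\<lambda>u. (h u * mu u) * E)" by (simp only: Fs)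
  then have "integrable lborel (\<lambda>u. ((h u * mu u) * E) * inverse E)"
    by (rule integrable_mult_left)
  then have hint: "integrable lborel (\<lambda>u. h u * mu u)"
    using E0 by (simp add: mult.assoc)
  have "fock_inner f (fock_kernel z) = integral\<^sup>L lborel F" unfolding fock_inner_def F_def ..
  also have "\<dots> = (\<integral>u. F (z + u) \<partial>lborel)" by (rule integral_translate[OF Fm, symmetric])
  also have "\<dots> = (\<integral>u. h u * mu u \<partial>lborel) * E" by (simp only: Fs) (rule Bochner_Integration.integral_mult_left[OF hint])
  also have "\<dots> = complex_of_real gc * h 0 * E" by (simp only: mean_value_gauss[OF hh hint])
  also have "h 0 = f z" unfolding h_def by simp
  finally show ?thesis unfolding E_def .
qed

lemma point_bound:
  assumes f: "f \<in> fock_space"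
  shows "cmod (f z) \<le> fock_norm f * exp (pi * (cmod z)\<^sup>2 / 2) / sqrt gc"
proof -
  have g: "gc > 0" by (rule gc_pos)
  have "gc * cmod (f z) * exp (- pi * (cmod z)\<^sup>2 / 2) = cmod (fock_inner f (fock_kernel z))"
    unfolding reproducing[OF f] using g by (simp add: norm_mult)
  also have "\<dots> \<le> fock_norm f * fock_norm (fock_kernel z)" by (rule fock_CS[OF f kernel_in])
  also have "fock_norm (fock_kernel z) = sqrt gc" unfolding fock_norm_Nrm Nrm_kernel ..
  finally have *: "gc * cmod (f z) * exp (- pi * (cmod z)\<^sup>2 / 2) \<le> fock_norm f * sqrt gc" .
  have ee: "exp (- pi * (cmod z)\<^sup>2 / 2) * exp (pi * (cmod z)\<^sup>2 / 2) = 1"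
    by (simp add: exp_add[symmetric])
  have "gc * cmod (f z) = gc * cmod (f z) * exp (- pi * (cmod z)\<^sup>2 / 2) * exp (pi * (cmod z)\<^sup>2 / 2)"
    using ee by (simp add: mult.assoc)
  also have "\<dots> \<le> fock_norm f * sqrt gc * exp (pi * (cmod z)\<^sup>2 / 2)"
    by (rule mult_right_mono[OF *]) simp
  finally have "gc * cmod (f z) \<le> fock_norm f * sqrt gc * exp (pi * (cmod z)\<^sup>2 / 2)" .
  moreover have "sqrt gc * sqrt gc = gc" using g by simp
  ultimately have "sqrt gc * (sqrt gc * cmod (f z)) \<le> sqrt gc * (fock_norm f * exp (pi * (cmod z)\<^sup>2 / 2))"
    by (simp add: mult.assoc[symmetric] mult.commute)
  then have "sqrt gc * cmod (f z) \<le> fock_norm f * exp (pi * (cmod z)\<^sup>2 / 2)"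
    using g by (simp add: mult_le_cancel_left_pos)
  then show ?thesis using g by (simp add: pos_le_divide_eq mult.commute)
qed



lemma rank1_bounded:
  assumes g: "g \<in> fock_space" and p: "p \<in> fock_space"
  shows "fock_bounded (\<lambda>f w. fock_inner f g * p w)"
  unfolding fock_bounded_def
proof (intro conjI ballI allI)
  fix f assume "f \<in> fock_space"
  show "(\<lambda>w. fock_inner f g * p w) \<in> fock_space" by (rule fock_scale[OF p])
next
  fix f h a b assume f: "f \<in> fock_space" and h: "h \<in> fock_space"
  show "(\<lambda>w. fock_inner (\<lambda>w. a * f w + b * h w) g * p w) = (\<lambda>w. a * (fock_inner f g * p w) + b * (fock_inner h g * p w))"
    using inner_lin[OF f h g] by (simp add: algebra_simps)
next
  show "\<exists>C. \<forall>f\<in>fock_space. fock_norm (\<lambda>w. fock_inner f g * p w) \<le> C * fock_norm f"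
  proof (intro exI ballI)
    fix f assume f: "f \<in> fock_space"
    have "fock_norm (\<lambda>w. fock_inner f g * p w) = cmod (fock_inner f g) * fock_norm p"
      by (rule fock_norm_scale)
    also have "\<dots> \<le> (fock_norm f * fock_norm g) * fock_norm p"
      by (rule mult_right_mono[OF fock_CS[OF f g] fock_norm_nonneg])
    finally show "fock_norm (\<lambda>w. fock_inner f g * p w) \<le> (fock_norm g * fock_norm p) * fock_norm f"
      by (simp add: algebra_simps)
  qed
qed

lemma bounded_sq:
  assumes "fock_norm X \<le> C * fock_norm f"
  shows "(fock_norm X)\<^sup>2 \<le> C\<^sup>2 * (fock_norm f)\<^sup>2"
proof -
  have "(fock_norm X)\<^sup>2 \<le> (C * fock_norm f)\<^sup>2"
    using assms fock_norm_nonneg[of "X"] by (intro power_mono) auto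
  then show ?thesis by (simp add: power_mult_distrib)
qed

lemma bounded_comb:
  assumes S1: "fock_bounded S1" and S2: "fock_bounded S2"
  shows "fock_bounded (\<lambda>f w. a * S1 f w + b * S2 f w)"
proof -
  note B1 = S1[unfolded fock_bounded_def] and B2 = S2[unfolded fock_bounded_def]
  obtain C1 where C1: "\<And>f. f \<in> fock_space \<Longrightarrow> fock_norm (S1 f) \<le> C1 * fock_norm f" using B1 by blast
  obtain C2 where C2: "\<And>f. f \<in> fock_space \<Longrightarrow> fock_norm (S2 f) \<le> C2 * fock_norm f" using B2 by blast
  show ?thesis unfolding fock_bounded_def
  proof (intro conjI ballI allI)
    fix f assume f: "f \<in> fock_space"
    show "(\<lambda>w. a * S1 f w + b * S2 f w) \<in> fock_space"
      using B1 B2 f by (intro fock_lin(1)) auto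
  next
    fix f h \<alpha> \<beta> assume f: "f \<in> fock_space" and h: "h \<in> fock_space"
    have l1: "S1 (\<lambda>w. \<alpha> * f w + \<beta> * h w) = (\<lambda>w. \<alpha> * S1 f w + \<beta> * S1 h w)" using B1 f h by blast
    have l2: "S2 (\<lambda>w. \<alpha> * f w + \<beta> * h w) = (\<lambda>w. \<alpha> * S2 f w + \<beta> * S2 h w)" using B2 f h by blast
    show "(\<lambda>w. a * S1 (\<lambda>w. \<alpha> * f w + \<beta> * h w) w + b * S2 (\<lambda>w. \<alpha> * f w + \<beta> * h w) w) =
          (\<lambda>w. \<alpha> * (a * S1 f w + b * S2 f w) + \<beta> * (a * S1 h w + b * S2 h w))"
      unfolding l1 l2 by (simp add: algebra_simps)
  next
    show "\<exists>C. \<forall>f\<in>fock_space. fock_norm (\<lambda>w. a * S1 f w + b * S2 f w) \<le> C * fock_norm f"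
    proof (intro exI ballI)
      fix f assume f: "f \<in> fock_space"
      have s1: "S1 f \<in> fock_space" and s2: "S2 f \<in> fock_space" using B1 B2 f by auto
      have "Nrm (\<lambda>w. a * S1 f w + b * S2 f w) \<le> 2 * (cmod a)\<^sup>2 * Nrm (S1 f) + 2 * (cmod b)\<^sup>2 * Nrm (S2 f)"
        by (rule fock_lin(2)[OF s1 s2])
      also have "\<dots> \<le> 2 * (cmod a)\<^sup>2 * (C1\<^sup>2 * (fock_norm f)\<^sup>2) + 2 * (cmod b)\<^sup>2 * (C2\<^sup>2 * (fock_norm f)\<^sup>2)"
        unfolding Nrm_fock_norm
        by (intro add_mono mult_left_mono bounded_sq[OF C1[OF f]] bounded_sq[OF C2[OF f]]) auto
      also have "\<dots> = (sqrt (2 * (cmod a)\<^sup>2 * C1\<^sup>2 + 2 * (cmod b)\<^sup>2 * C2\<^sup>2) * fock_norm f)\<^sup>2"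
        by (simp add: power_mult_distrib algebra_simps)
      finally have "Nrm (\<lambda>w. a * S1 f w + b * S2 f w) \<le> (sqrt (2 * (cmod a)\<^sup>2 * C1\<^sup>2 + 2 * (cmod b)\<^sup>2 * C2\<^sup>2) * fock_norm f)\<^sup>2" .
      then show "fock_norm (\<lambda>w. a * S1 f w + b * S2 f w) \<le> sqrt (2 * (cmod a)\<^sup>2 * C1\<^sup>2 + 2 * (cmod b)\<^sup>2 * C2\<^sup>2) * fock_norm f"
        unfolding Nrm_fock_norm by (rule power2_le_imp_le) (auto intro!: mult_nonneg_nonneg fock_norm_nonneg)
    qed
  qed
qed

lemma proj_bounded: "fock_bounded (fock_proj j)"
proof -
  have "fock_proj j = (\<lambda>f w. fock_inner f (fock_basis j) * fock_basis j w)"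
    by (intro ext) (simp add: fock_proj_def)
  then show ?thesis using rank1_bounded[OF fock_basis_in fock_basis_in] by simp
qed

definition T0 :: "nat \<Rightarrow> (complex \<Rightarrow> complex) \<Rightarrow> complex \<Rightarrow> complex" where
  "T0 m h = (\<lambda>w. complex_of_real pi *
          (of_nat m * fock_proj (m - 1) h w
           - of_nat (2 * m + 1) * fock_proj m h w
           + of_nat (m + 1) * fock_proj (m + 1) h w))"

lemma T0_bounded: "fock_bounded (T0 m)"
proof -
  let ?S1 = "\<lambda>f w. (complex_of_real pi * of_nat m) * fock_proj (m - 1) f w + (- complex_of_real pi * of_nat (2 * m + 1)) * fock_proj m f w"
  have b1: "fock_bounded ?S1" by (intro bounded_comb proj_bounded)
  have b: "fock_bounded (\<lambda>f w. 1 * ?S1 f w + (complex_of_real pi * of_nat (m + 1)) * fock_proj (m + 1) f w)"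
    by (intro bounded_comb b1 proj_bounded)
  have "T0 m = (\<lambda>f w. 1 * ?S1 f w + (complex_of_real pi * of_nat (m + 1)) * fock_proj (m + 1) f w)"
    by (intro ext) (simp add: T0_def algebra_simps)
  then show ?thesis using b by simp
qed

definition nuc :: "((complex \<Rightarrow> complex) \<Rightarrow> (complex \<Rightarrow> complex)) \<Rightarrow> (nat \<Rightarrow> complex \<Rightarrow> complex) \<Rightarrow> (nat \<Rightarrow> complex \<Rightarrow> complex) \<Rightarrow> bool" where
  "nuc T fs gs \<longleftrightarrow> (\<forall>k. fs k \<in> fock_space \<and> gs k \<in> fock_space) \<and>
        summable (\<lambda>k. fock_norm (fs k) * fock_norm (gs k)) \<and>
        (\<forall>h\<in>fock_space. \<forall>w. T h w = (\<Sum>k. fock_inner h (gs k) * fs k w))"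

lemma trace_class_nuc: "fock_trace_class T \<longleftrightarrow> fock_bounded T \<and> (\<exists>fs gs. nuc T fs gs)"
  unfolding fock_trace_class_def nuc_def by blast

definition pb :: "complex \<Rightarrow> real" where "pb w = exp (pi * (cmod w)\<^sup>2 / 2) / sqrt gc"

lemma pb_nonneg: "pb w \<ge> 0" unfolding pb_def using gc_pos by simp

lemma point_bound': "f \<in> fock_space \<Longrightarrow> cmod (f w) \<le> fock_norm f * pb w"
  using point_bound[of f w] unfolding pb_def by (simp add: mult.commute mult.left_commute)

lemma nuc_point_summable:
  assumes fs: "\<And>k. fs k \<in> fock_space" and gs: "\<And>k. gs k \<in> fock_space"
    and sm: "summable (\<lambda>k. fock_norm (fs k) * fock_norm (gs k))"
  shows "summable (\<lambda>k. cmod (fs k w) * cmod (gs k u))"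
proof (rule summable_comparison_test)
  show "summable (\<lambda>k. fock_norm (fs k) * fock_norm (gs k) * (pb w * pb u))"
    by (rule summable_mult2[OF sm])
  show "\<exists>N. \<forall>k\<ge>N. norm (cmod (fs k w) * cmod (gs k u)) \<le> fock_norm (fs k) * fock_norm (gs k) * (pb w * pb u)"
  proof (intro exI allI impI)
    fix k
    have "cmod (fs k w) * cmod (gs k u) \<le> (fock_norm (fs k) * pb w) * (fock_norm (gs k) * pb u)"
      by (intro mult_mono point_bound'[OF fs] point_bound'[OF gs]) (auto intro!: mult_nonneg_nonneg fock_norm_nonneg pb_nonneg)
    then show "norm (cmod (fs k w) * cmod (gs k u)) \<le> fock_norm (fs k) * fock_norm (gs k) * (pb w * pb u)"
      by (simp add: algebra_simps)
  qed
qed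

lemma nuc_apply_summable:
  assumes fs: "\<And>k. fs k \<in> fock_space" and gs: "\<And>k. gs k \<in> fock_space"
    and sm: "summable (\<lambda>k. fock_norm (fs k) * fock_norm (gs k))" and h: "h \<in> fock_space"
  shows "summable (\<lambda>k. cmod (fock_inner h (gs k)) * cmod (fs k w))"
proof (rule summable_comparison_test)
  show "summable (\<lambda>k. fock_norm (fs k) * fock_norm (gs k) * (fock_norm h * pb w))"
    by (rule summable_mult2[OF sm])
  show "\<exists>N. \<forall>k\<ge>N. norm (cmod (fock_inner h (gs k)) * cmod (fs k w)) \<le> fock_norm (fs k) * fock_norm (gs k) * (fock_norm h * pb w)"
  proof (intro exI allI impI)
    fix k
    have "cmod (fock_inner h (gs k)) * cmod (fs k w) \<le> (fock_norm h * fock_norm (gs k)) * (fock_norm (fs k) * pb w)"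
      by (intro mult_mono fock_CS[OF h gs] point_bound'[OF fs]) (auto intro!: mult_nonneg_nonneg fock_norm_nonneg pb_nonneg)
    then show "norm (cmod (fock_inner h (gs k)) * cmod (fs k w)) \<le> fock_norm (fs k) * fock_norm (gs k) * (fock_norm h * pb w)"
      by (simp add: algebra_simps)
  qed
qed

lemma nuc_integral_swap:
  assumes fs: "\<And>k. fs k \<in> fock_space" and gs: "\<And>k. gs k \<in> fock_space"
    and sm: "summable (\<lambda>k. fock_norm (fs k) * fock_norm (gs k))" and h: "h \<in> fock_space" and q: "q \<in> fock_space"
  shows "fock_inner (\<lambda>w. \<Sum>k. fock_inner h (gs k) * fs k w) q = (\<Sum>k. fock_inner h (gs k) * fock_inner (fs k) q)"
proof -
  define F where "F = (\<lambda>k w. fock_inner h (gs k) * (fs k w * cnj (q w) * mu w))"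
  have intF: "integrable lborel (F k)" for k
    unfolding F_def by (intro integrable_mult_right L2_prod_integrable(2)[OF fs q])
  have nF: "norm (F k w) = cmod (fock_inner h (gs k)) * cmod (fs k w) * (cmod (q w) * exp (- pi * (cmod w)\<^sup>2))" for k w
    unfolding F_def by (simp add: norm_mult)
  have ps: "summable (\<lambda>k. norm (F k w))" for w
    unfolding nF using summable_mult2[OF nuc_apply_summable[OF fs gs sm h, of w], of "cmod (q w) * exp (- pi * (cmod w)\<^sup>2)"]
    by (simp add: mult.assoc)
  have "summable (\<lambda>k. \<integral>w. norm (F k w) \<partial>lborel)"
  proof (rule summable_comparison_test)
    show "summable (\<lambda>k. fock_norm (fs k) * fock_norm (gs k) * (fock_norm h * fock_norm q))"
      by (rule summable_mult2[OF sm])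
    show "\<exists>N. \<forall>k\<ge>N. norm (\<integral>w. norm (F k w) \<partial>lborel) \<le> fock_norm (fs k) * fock_norm (gs k) * (fock_norm h * fock_norm q)"
    proof (intro exI allI impI)
      fix k
      have "(\<integral>w. norm (F k w) \<partial>lborel) = cmod (fock_inner h (gs k)) * (\<integral>w. cmod (fs k w) * cmod (q w) * exp (- pi * (cmod w)\<^sup>2) \<partial>lborel)"
        unfolding nF by (simp add: mult.assoc)
      also have "\<dots> \<le> (fock_norm h * fock_norm (gs k)) * (fock_norm (fs k) * fock_norm q)"
        by (intro mult_mono fock_CS[OF h gs] fock_CS_abs[OF fs q]) (auto intro!: mult_nonneg_nonneg fock_norm_nonneg integral_nonneg_AE)
      finally have "(\<integral>w. norm (F k w) \<partial>lborel) \<le> (fock_norm h * fock_norm (gs k)) * (fock_norm (fs k) * fock_norm q)" .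
      moreover have "(\<integral>w. norm (F k w) \<partial>lborel) \<ge> 0" by (rule integral_nonneg_AE) auto
      ultimately show "norm (\<integral>w. norm (F k w) \<partial>lborel) \<le> fock_norm (fs k) * fock_norm (gs k) * (fock_norm h * fock_norm q)"
        by (simp add: algebra_simps)
    qed
  qed
  then have eq: "(\<integral>w. (\<Sum>k. F k w) \<partial>lborel) = (\<Sum>k. integral\<^sup>L lborel (F k))"
    using intF ps by (intro integral_suminf) auto
  have "(\<lambda>w. (\<Sum>k. fock_inner h (gs k) * fs k w) * cnj (q w) * mu w) = (\<lambda>w. \<Sum>k. F k w)"
  proof
    fix w
    have s: "summable (\<lambda>k. fock_inner h (gs k) * fs k w)"
      by (rule summable_norm_cancel) (use nuc_apply_summable[OF fs gs sm h, of w] in \<open>simp add: norm_mult\<close>)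
    show "(\<Sum>k. fock_inner h (gs k) * fs k w) * cnj (q w) * mu w = (\<Sum>k. F k w)"
      unfolding F_def using suminf_mult2[OF s, of "cnj (q w) * mu w"] by (simp add: mult.assoc)
  qed
  then have "fock_inner (\<lambda>w. \<Sum>k. fock_inner h (gs k) * fs k w) q = (\<Sum>k. integral\<^sup>L lborel (F k))"
    unfolding fock_inner_def eq[symmetric] by simp
  also have "\<dots> = (\<Sum>k. fock_inner h (gs k) * fock_inner (fs k) q)"
    unfolding F_def fock_inner_def by simp
  finally show ?thesis .
qed

lemma berezin_nuc:
  assumes n: "nuc T fs gs"
  shows "berezin T z = complex_of_real (gc\<^sup>2 * exp (- pi * (cmod z)\<^sup>2)) * (\<Sum>k. fs k z * cnj (gs k z))"
proof -
  have fs: "\<And>k. fs k \<in> fock_space" and gs: "\<And>k. gs k \<in> fock_space"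
    and sm: "summable (\<lambda>k. fock_norm (fs k) * fock_norm (gs k))"
    and rep: "\<And>h w. h \<in> fock_space \<Longrightarrow> T h w = (\<Sum>k. fock_inner h (gs k) * fs k w)"
    using n unfolding nuc_def by auto
  define E where "E = exp (- pi * (cmod z)\<^sup>2 / 2)"
  have EE: "E * E = exp (- pi * (cmod z)\<^sup>2)" unfolding E_def by (simp add: exp_add[symmetric])
  have Tk: "T (fock_kernel z) = (\<lambda>w. \<Sum>k. fock_inner (fock_kernel z) (gs k) * fs k w)"
    using rep[OF kernel_in] by (intro ext) simp
  have "berezin T z = (\<Sum>k. fock_inner (fock_kernel z) (gs k) * fock_inner (fs k) (fock_kernel z))"
    unfolding berezin_def Tk by (rule nuc_integral_swap[OF fs gs sm kernel_in kernel_in])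
  also have "\<dots> = (\<Sum>k. complex_of_real (gc\<^sup>2 * exp (- pi * (cmod z)\<^sup>2)) * (fs k z * cnj (gs k z)))"
  proof (rule suminf_cong)
    fix k
    have "fock_inner (fock_kernel z) (gs k) * fock_inner (fs k) (fock_kernel z)
        = cnj (complex_of_real gc * gs k z * complex_of_real E) * (complex_of_real gc * fs k z * complex_of_real E)"
      by (subst inner_cnj) (simp add: reproducing[OF gs] reproducing[OF fs] E_def)
    also have "\<dots> = complex_of_real (gc\<^sup>2 * (E * E)) * (fs k z * cnj (gs k z))"
      by (simp add: power2_eq_square algebra_simps)
    finally show "fock_inner (fock_kernel z) (gs k) * fock_inner (fs k) (fock_kernel z) = complex_of_real (gc\<^sup>2 * exp (- pi * (cmod z)\<^sup>2)) * (fs k z * cnj (gs k z))"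
      unfolding EE .
  qed
  also have "\<dots> = complex_of_real (gc\<^sup>2 * exp (- pi * (cmod z)\<^sup>2)) * (\<Sum>k. fs k z * cnj (gs k z))"
  proof (rule suminf_mult)
    show "summable (\<lambda>k. fs k z * cnj (gs k z))"
      by (rule summable_norm_cancel) (use nuc_point_summable[OF fs gs sm, of z z] in \<open>simp add: norm_mult\<close>)
  qed
  finally show ?thesis .
qed

definition T0g :: "nat \<Rightarrow> nat \<Rightarrow> complex \<Rightarrow> complex" where
  "T0g m k = (if k = 0 then fock_basis (m - 1) else if k = 1 then fock_basis m
     else if k = 2 then fock_basis (m + 1) else (\<lambda>w. 0))"

definition T0c :: "nat \<Rightarrow> nat \<Rightarrow> complex" where
  "T0c m k = (if k = 0 then complex_of_real pi * of_nat m
     else if k = 1 then - complex_of_real pi * of_nat (2 * m + 1)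
     else if k = 2 then complex_of_real pi * of_nat (m + 1) else 0)"

definition T0f :: "nat \<Rightarrow> nat \<Rightarrow> complex \<Rightarrow> complex" where
  "T0f m k = (\<lambda>w. T0c m k * T0g m k w)"

lemma T0g_in: "T0g m k \<in> fock_space"
  unfolding T0g_def by (auto intro!: fock_basis_in fock_zero)

lemma fock_norm_zero: "fock_norm (\<lambda>w. 0) = 0"
  unfolding fock_norm_Nrm Nrm_def by simp

lemma inner_zero_right: "fock_inner h (\<lambda>w. 0) = 0"
  unfolding fock_inner_def by simp

lemma T0_nuc: "nuc (T0 m) (T0f m) (T0g m)"
  unfolding nuc_def
proof (intro conjI allI ballI)
  fix k
  show "T0f m k \<in> fock_space" unfolding T0f_def by (rule fock_scale[OF T0g_in])
  show "T0g m k \<in> fock_space" by (rule T0g_in)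
next
  show "summable (\<lambda>k. fock_norm (T0f m k) * fock_norm (T0g m k))"
    by (rule summable_finite[of "{0,1,2}"]) (auto simp: T0f_def T0g_def T0c_def fock_norm_zero)
next
  fix h w
  have "(\<Sum>k. fock_inner h (T0g m k) * T0f m k w) = (\<Sum>k\<in>{0,1,2}. fock_inner h (T0g m k) * T0f m k w)"
    by (rule suminf_finite) (auto simp: T0f_def T0g_def T0c_def)
  also have "\<dots> = T0 m h w"
    by (simp add: T0f_def T0g_def T0c_def T0_def fock_proj_def algebra_simps)
  finally show "T0 m h w = (\<Sum>k. fock_inner h (T0g m k) * T0f m k w)" by simp
qed

definition sing :: "(complex \<Rightarrow> complex) \<Rightarrow> nat \<Rightarrow> complex \<Rightarrow> complex" where
  "sing f k = (if k = 0 then f else (\<lambda>w. 0))"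

lemma proj_nuc: "nuc (fock_proj j) (sing (fock_basis j)) (sing (fock_basis j))"
  unfolding nuc_def
proof (intro conjI allI ballI)
  fix k
  show "sing (fock_basis j) k \<in> fock_space" by (auto simp: sing_def intro!: fock_basis_in fock_zero)
  then show "sing (fock_basis j) k \<in> fock_space" .
next
  show "summable (\<lambda>k. fock_norm (sing (fock_basis j) k) * fock_norm (sing (fock_basis j) k))"
    by (rule summable_finite[of "{0}"]) (auto simp: fock_norm_zero sing_def)
next
  fix h w
  have "(\<Sum>k. fock_inner h (sing (fock_basis j) k) * sing (fock_basis j) k w)
      = (\<Sum>k\<in>{0}. fock_inner h (sing (fock_basis j) k) * sing (fock_basis j) k w)"
    by (rule suminf_finite) (auto simp: sing_def)
  then show "fock_proj j h w = (\<Sum>k. fock_inner h (sing (fock_basis j) k) * sing (fock_basis j) k w)"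
    by (simp add: fock_proj_def sing_def)
qed

lemma berezin_proj: "berezin (fock_proj j) z = complex_of_real (gc\<^sup>2 * exp (- pi * (cmod z)\<^sup>2) * (pi ^ j / fact j) * ((cmod z)\<^sup>2) ^ j)"
proof -
  have "berezin (fock_proj j) z = complex_of_real (gc\<^sup>2 * exp (- pi * (cmod z)\<^sup>2)) * (\<Sum>k. sing (fock_basis j) k z * cnj (sing (fock_basis j) k z))"
    by (rule berezin_nuc[OF proj_nuc])
  also have "(\<Sum>k. sing (fock_basis j) k z * cnj (sing (fock_basis j) k z)) = fock_basis j z * cnj (fock_basis j z)"
    by (subst suminf_finite[of "{0}"]) (auto simp: sing_def)
  also have "fock_basis j z * cnj (fock_basis j z) = complex_of_real ((pi ^ j / fact j) * ((cmod z)\<^sup>2) ^ j)"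
  proof -
    have c: "sqrt (pi ^ j / fact j) * sqrt (pi ^ j / fact j) = pi ^ j / fact j" by simp
    have "fock_basis j z * cnj (fock_basis j z) = complex_of_real (sqrt (pi ^ j / fact j)) * complex_of_real (sqrt (pi ^ j / fact j)) * (z * cnj z) ^ j"
      by (simp add: fock_basis_def power_mult_distrib algebra_simps)
    also have "\<dots> = complex_of_real ((pi ^ j / fact j) * ((cmod z)\<^sup>2) ^ j)"
      unfolding of_real_mult[symmetric] c by (simp add: complex_norm_square[symmetric])
    finally show ?thesis .
  qed
  finally show ?thesis by (simp add: mult.assoc)
qed



lemma dir_deriv_x:
  fixes H H1 :: "real \<Rightarrow> real"
  assumes d: "\<And>s. (H has_real_derivative H1 s) (at s)"
  shows "((\<lambda>t. H ((Re z + t)\<^sup>2 + (Im z)\<^sup>2)) has_real_derivative H1 ((cmod z)\<^sup>2) * (2 * Re z)) (at 0)"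
proof -
  have i: "((\<lambda>t. (Re z + t)\<^sup>2 + (Im z)\<^sup>2) has_real_derivative 2 * Re z) (at 0)"
    by (auto intro!: derivative_eq_intros)
  have "((\<lambda>t. H ((Re z + t)\<^sup>2 + (Im z)\<^sup>2)) has_real_derivative H1 ((Re z + 0)\<^sup>2 + (Im z)\<^sup>2) * (2 * Re z)) (at 0)"
    by (rule DERIV_chain2[OF d i])
  then show ?thesis by (simp add: cmod_power2)
qed

lemma dir_deriv_y:
  fixes H H1 :: "real \<Rightarrow> real"
  assumes d: "\<And>s. (H has_real_derivative H1 s) (at s)"
  shows "((\<lambda>t. H ((Re z)\<^sup>2 + (Im z + t)\<^sup>2)) has_real_derivative H1 ((cmod z)\<^sup>2) * (2 * Im z)) (at 0)"
proof -
  have i: "((\<lambda>t. (Re z)\<^sup>2 + (Im z + t)\<^sup>2) has_real_derivative 2 * Im z) (at 0)"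
    by (auto intro!: derivative_eq_intros)
  have "((\<lambda>t. H ((Re z)\<^sup>2 + (Im z + t)\<^sup>2)) has_real_derivative H1 ((Re z)\<^sup>2 + (Im z + 0)\<^sup>2) * (2 * Im z)) (at 0)"
    by (rule DERIV_chain2[OF d i])
  then show ?thesis by (simp add: cmod_power2)
qed

lemma laplacian_radial:
  fixes G G1 G2 :: "real \<Rightarrow> real"
  assumes d1: "\<And>s. (G has_real_derivative G1 s) (at s)" and d2: "\<And>s. (G1 has_real_derivative G2 s) (at s)"
  shows "has_laplacian (\<lambda>z. complex_of_real (G ((cmod z)\<^sup>2))) (\<lambda>z. complex_of_real ((cmod z)\<^sup>2 * G2 ((cmod z)\<^sup>2) + G1 ((cmod z)\<^sup>2)))"
  unfolding has_laplacian_def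
proof (intro exI allI conjI)
  fix z :: complex
  let ?s = "(cmod z)\<^sup>2"
  have ex: "(cmod (z + complex_of_real t))\<^sup>2 = (Re z + t)\<^sup>2 + (Im z)\<^sup>2" for t
    by (simp add: cmod_power2)
  have ey: "(cmod (z + \<i> * complex_of_real t))\<^sup>2 = (Re z)\<^sup>2 + (Im z + t)\<^sup>2" for t
    by (simp add: cmod_power2)
  show "((\<lambda>t. complex_of_real (G ((cmod (z + complex_of_real t))\<^sup>2))) has_vector_derivative
      complex_of_real (G1 ?s * (2 * Re z))) (at 0)"
    unfolding ex by (intro has_vector_derivative_of_real dir_deriv_x[OF d1])
  show "((\<lambda>t. complex_of_real (G ((cmod (z + \<i> * complex_of_real t))\<^sup>2))) has_vector_derivative
      complex_of_real (G1 ?s * (2 * Im z))) (at 0)"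
    unfolding ey by (intro has_vector_derivative_of_real dir_deriv_y[OF d1])
  have dxx: "((\<lambda>t. G1 ((Re z + t)\<^sup>2 + (Im z)\<^sup>2) * (2 * (Re z + t))) has_real_derivative
      G2 ?s * (2 * Re z) * (2 * Re z) + G1 ?s * 2) (at 0)"
  proof -
    have "((\<lambda>t. G1 ((Re z + t)\<^sup>2 + (Im z)\<^sup>2) * (2 * (Re z + t))) has_real_derivative
      G2 ?s * (2 * Re z) * (2 * (Re z + 0)) + 2 * G1 ((Re z + 0)\<^sup>2 + (Im z)\<^sup>2)) (at 0)"
      by (rule DERIV_mult[OF dir_deriv_x[OF d2]]) (auto intro!: derivative_eq_intros)
    then show ?thesis by (simp add: cmod_power2 algebra_simps)
  qed
  have dyy: "((\<lambda>t. G1 ((Re z)\<^sup>2 + (Im z + t)\<^sup>2) * (2 * (Im z + t))) has_real_derivative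
      G2 ?s * (2 * Im z) * (2 * Im z) + G1 ?s * 2) (at 0)"
  proof -
    have "((\<lambda>t. G1 ((Re z)\<^sup>2 + (Im z + t)\<^sup>2) * (2 * (Im z + t))) has_real_derivative
      G2 ?s * (2 * Im z) * (2 * (Im z + 0)) + 2 * G1 ((Re z)\<^sup>2 + (Im z + 0)\<^sup>2)) (at 0)"
      by (rule DERIV_mult[OF dir_deriv_y[OF d2]]) (auto intro!: derivative_eq_intros)
    then show ?thesis by (simp add: cmod_power2 algebra_simps)
  qed
  have fx: "(\<lambda>t. complex_of_real (G1 ((cmod (z + complex_of_real t))\<^sup>2) * (2 * Re (z + complex_of_real t))))
      = (\<lambda>t. complex_of_real (G1 ((Re z + t)\<^sup>2 + (Im z)\<^sup>2) * (2 * (Re z + t))))"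
    unfolding ex by simp
  show "((\<lambda>t. complex_of_real (G1 ((cmod (z + complex_of_real t))\<^sup>2) * (2 * Re (z + complex_of_real t)))) has_vector_derivative
      complex_of_real (G2 ?s * (2 * Re z) * (2 * Re z) + G1 ?s * 2)) (at 0)"
    unfolding fx by (intro has_vector_derivative_of_real dxx)
  have fy: "(\<lambda>t. complex_of_real (G1 ((cmod (z + \<i> * complex_of_real t))\<^sup>2) * (2 * Im (z + \<i> * complex_of_real t))))
      = (\<lambda>t. complex_of_real (G1 ((Re z)\<^sup>2 + (Im z + t)\<^sup>2) * (2 * (Im z + t))))"
    unfolding ey by simp
  show "((\<lambda>t. complex_of_real (G1 ((cmod (z + \<i> * complex_of_real t))\<^sup>2) * (2 * Im (z + \<i> * complex_of_real t)))) has_vector_derivative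
      complex_of_real (G2 ?s * (2 * Im z) * (2 * Im z) + G1 ?s * 2)) (at 0)"
    unfolding fy by (intro has_vector_derivative_of_real dyy)
  show "complex_of_real (?s * G2 ?s + G1 ?s) =
     (complex_of_real (G2 ?s * (2 * Re z) * (2 * Re z) + G1 ?s * 2) + complex_of_real (G2 ?s * (2 * Im z) * (2 * Im z) + G1 ?s * 2)) / 4"
  proof -
    have alg: "((Re z)\<^sup>2 + (Im z)\<^sup>2) * X + Y = ((X * (2 * Re z) * (2 * Re z) + Y * 2) + (X * (2 * Im z) * (2 * Im z) + Y * 2)) / 4" for X Y :: real
      by (simp add: power2_eq_square algebra_simps)
    have "?s * G2 ?s + G1 ?s = ((G2 ?s * (2 * Re z) * (2 * Re z) + G1 ?s * 2) + (G2 ?s * (2 * Im z) * (2 * Im z) + G1 ?s * 2)) / 4"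
      using alg[of "G2 ?s" "G1 ?s"] unfolding cmod_power2[of z, symmetric] .
    then show ?thesis by (simp only: of_real_add of_real_divide of_real_numeral)
  qed
qed

definition aa :: "nat \<Rightarrow> real" where "aa j = pi ^ j / fact j"

definition GG :: "nat \<Rightarrow> real \<Rightarrow> real" where
  "GG m s = gc\<^sup>2 * aa m * (exp (- pi * s) * s ^ m)"
definition GG1 :: "nat \<Rightarrow> real \<Rightarrow> real" where
  "GG1 m s = gc\<^sup>2 * aa m * (exp (- pi * s) * (real m * s ^ (m - 1) - pi * s ^ m))"
definition GG2 :: "nat \<Rightarrow> real \<Rightarrow> real" where
  "GG2 m s = gc\<^sup>2 * aa m * (exp (- pi * s) * (real m * (real (m - 1) * s ^ (m - 1 - 1)) - 2 * pi * real m * s ^ (m - 1) + pi\<^sup>2 * s ^ m))"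

lemma GG_deriv: "(GG m has_real_derivative GG1 m s) (at s)"
proof -
  have "((\<lambda>s. exp (- pi * s) * s ^ m) has_real_derivative (exp (- pi * s) * (- pi) * s ^ m + exp (- pi * s) * (real m * s ^ (m - 1)))) (at s)"
    by (auto intro!: derivative_eq_intros)
  then have "((\<lambda>s. gc\<^sup>2 * aa m * (exp (- pi * s) * s ^ m)) has_real_derivative gc\<^sup>2 * aa m * (exp (- pi * s) * (- pi) * s ^ m + exp (- pi * s) * (real m * s ^ (m - 1)))) (at s)"
    by (rule DERIV_cmult)
  then show ?thesis unfolding GG_def GG1_def by (simp add: algebra_simps)
qed

lemma GG1_deriv: "(GG1 m has_real_derivative GG2 m s) (at s)"
proof -
  have "((\<lambda>s. exp (- pi * s) * (real m * s ^ (m - 1) - pi * s ^ m)) has_real_derivative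
     (exp (- pi * s) * (- pi) * (real m * s ^ (m - 1) - pi * s ^ m) + exp (- pi * s) * (real m * (real (m - 1) * s ^ (m - 1 - 1)) - pi * (real m * s ^ (m - 1))))) (at s)"
    by (auto intro!: derivative_eq_intros)
  then have "((\<lambda>s. gc\<^sup>2 * aa m * (exp (- pi * s) * (real m * s ^ (m - 1) - pi * s ^ m))) has_real_derivative
     gc\<^sup>2 * aa m * (exp (- pi * s) * (- pi) * (real m * s ^ (m - 1) - pi * s ^ m) + exp (- pi * s) * (real m * (real (m - 1) * s ^ (m - 1 - 1)) - pi * (real m * s ^ (m - 1))))) (at s)"
    by (rule DERIV_cmult)
  then show ?thesis unfolding GG1_def GG2_def by (simp add: algebra_simps power2_eq_square)
qed

lemma GG_identity:
  "s * GG2 m s + GG1 m s = gc\<^sup>2 * exp (- pi * s) *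
     (pi * real m * aa (m - 1) * s ^ (m - 1) - pi * real (2 * m + 1) * aa m * s ^ m + pi * real (m + 1) * aa (m + 1) * s ^ (m + 1))"
proof (cases m)
  case 0
  then show ?thesis by (simp add: GG1_def GG2_def aa_def power2_eq_square algebra_simps)
next
  case (Suc n)
  note m = Suc
  show ?thesis
  proof (cases n)
    case 0
    then show ?thesis using m by (simp add: GG1_def GG2_def aa_def power2_eq_square algebra_simps)
  next
    case (Suc k)
    have mk: "m = Suc (Suc k)" using m Suc by simp
    have r1: "pi * aa (m - 1) = real m * aa m"
      unfolding mk aa_def by (simp add: field_simps del: fact_Suc) (simp add: algebra_simps)
    have r2: "pi * real (m + 1) * aa (m + 1) = pi * (pi * aa m)"
      unfolding aa_def by (simp add: field_simps del: fact_Suc) (simp add: algebra_simps)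
    have "s * GG2 m s + GG1 m s = gc\<^sup>2 * exp (- pi * s) * aa m * (real m * real m * s ^ (m - 1) - pi * real (2 * m + 1) * s ^ m + pi * pi * s ^ (m + 1))"
      unfolding GG1_def GG2_def mk by (simp add: power2_eq_square algebra_simps)
    also have "\<dots> = gc\<^sup>2 * exp (- pi * s) *
     (real m * (pi * aa (m - 1)) * s ^ (m - 1) - pi * real (2 * m + 1) * aa m * s ^ m + pi * (pi * aa m) * s ^ (m + 1))"
      unfolding r1 by (simp add: algebra_simps)
    also have "\<dots> = gc\<^sup>2 * exp (- pi * s) *
     (pi * real m * aa (m - 1) * s ^ (m - 1) - pi * real (2 * m + 1) * aa m * s ^ m + pi * real (m + 1) * aa (m + 1) * s ^ (m + 1))"
      unfolding r2[symmetric] by (simp add: algebra_simps)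
    finally show ?thesis .
  qed
qed

lemma basis_sq: "fock_basis j z * cnj (fock_basis j z) = complex_of_real (aa j * ((cmod z)\<^sup>2) ^ j)"
proof -
  have c: "sqrt (pi ^ j / fact j) * sqrt (pi ^ j / fact j) = pi ^ j / fact j" by simp
  have "fock_basis j z * cnj (fock_basis j z) = complex_of_real (sqrt (pi ^ j / fact j)) * complex_of_real (sqrt (pi ^ j / fact j)) * (z * cnj z) ^ j"
    by (simp add: fock_basis_def power_mult_distrib algebra_simps)
  also have "\<dots> = complex_of_real (aa j * ((cmod z)\<^sup>2) ^ j)"
    unfolding of_real_mult[symmetric] c aa_def by (simp add: complex_norm_square[symmetric])
  finally show ?thesis .
qed

lemma berezin_proj_GG: "berezin (fock_proj m) = (\<lambda>z. complex_of_real (GG m ((cmod z)\<^sup>2)))"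
proof
  fix z
  show "berezin (fock_proj m) z = complex_of_real (GG m ((cmod z)\<^sup>2))"
    unfolding berezin_proj GG_def aa_def by (simp add: algebra_simps)
qed

lemma berezin_T0: "berezin (T0 m) = (\<lambda>z. complex_of_real ((cmod z)\<^sup>2 * GG2 m ((cmod z)\<^sup>2) + GG1 m ((cmod z)\<^sup>2)))"
proof
  fix z
  let ?s = "(cmod z)\<^sup>2"
  have "berezin (T0 m) z = complex_of_real (gc\<^sup>2 * exp (- pi * ?s)) * (\<Sum>k. T0f m k z * cnj (T0g m k z))"
    by (rule berezin_nuc[OF T0_nuc])
  also have "(\<Sum>k. T0f m k z * cnj (T0g m k z)) = (\<Sum>k\<in>{0,1,2}. T0f m k z * cnj (T0g m k z))"
    by (rule suminf_finite) (auto simp: T0f_def T0g_def T0c_def)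
  also have "\<dots> = complex_of_real pi * of_nat m * complex_of_real (aa (m - 1) * ?s ^ (m - 1))
       + (- complex_of_real pi * of_nat (2 * m + 1)) * complex_of_real (aa m * ?s ^ m)
       + complex_of_real pi * of_nat (m + 1) * complex_of_real (aa (m + 1) * ?s ^ (m + 1))"
    by (simp add: T0f_def T0g_def T0c_def basis_sq mult.assoc)
  finally have "berezin (T0 m) z = complex_of_real (gc\<^sup>2 * exp (- pi * ?s) *
     (pi * real m * aa (m - 1) * ?s ^ (m - 1) - pi * real (2 * m + 1) * aa m * ?s ^ m + pi * real (m + 1) * aa (m + 1) * ?s ^ (m + 1)))"
    by (simp add: algebra_simps)
  then show "berezin (T0 m) z = complex_of_real (?s * GG2 m ?s + GG1 m ?s)"
    unfolding GG_identity .
qed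

lemma laplacian_proj: "has_laplacian (berezin (fock_proj m)) (berezin (T0 m))"
  unfolding berezin_proj_GG berezin_T0 by (rule laplacian_radial[OF GG_deriv GG1_deriv])

lemma T0_trace_class: "fock_trace_class (T0 m)"
  unfolding trace_class_nuc using T0_bounded T0_nuc by blast

lemma W21_proj: "W21 (fock_proj m)"
  unfolding W21_def using proj_bounded T0_trace_class laplacian_proj by blast



lemma laplacian_unique:
  assumes "has_laplacian F G1" and "has_laplacian F G2"
  shows "G1 = G2"
proof -
  obtain Fx Fy Fxx Fyy where A: "\<And>z. ((\<lambda>t::real. F (z + complex_of_real t)) has_vector_derivative Fx z) (at 0) \<and>
        ((\<lambda>t::real. F (z + \<i> * complex_of_real t)) has_vector_derivative Fy z) (at 0) \<and>
        ((\<lambda>t::real. Fx (z + complex_of_real t)) has_vector_derivative Fxx z) (at 0) \<and>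
        ((\<lambda>t::real. Fy (z + \<i> * complex_of_real t)) has_vector_derivative Fyy z) (at 0) \<and>
        G1 z = (Fxx z + Fyy z) / 4"
    using assms(1) unfolding has_laplacian_def by blast
  obtain Fx' Fy' Fxx' Fyy' where B: "\<And>z. ((\<lambda>t::real. F (z + complex_of_real t)) has_vector_derivative Fx' z) (at 0) \<and>
        ((\<lambda>t::real. F (z + \<i> * complex_of_real t)) has_vector_derivative Fy' z) (at 0) \<and>
        ((\<lambda>t::real. Fx' (z + complex_of_real t)) has_vector_derivative Fxx' z) (at 0) \<and>
        ((\<lambda>t::real. Fy' (z + \<i> * complex_of_real t)) has_vector_derivative Fyy' z) (at 0) \<and>
        G2 z = (Fxx' z + Fyy' z) / 4"
    using assms(2) unfolding has_laplacian_def by blast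
  have ex: "Fx = Fx'" by (intro ext vector_derivative_unique_at[OF conjunct1[OF A] conjunct1[OF B]])
  have ey: "Fy = Fy'" by (intro ext vector_derivative_unique_at[OF conjunct1[OF conjunct2[OF A]] conjunct1[OF conjunct2[OF B]]])
  show ?thesis
  proof
    fix z
    have "Fxx z = Fxx' z"
      using A[of z] B[of z] unfolding ex by (auto intro: vector_derivative_unique_at)
    moreover have "Fyy z = Fyy' z"
      using A[of z] B[of z] unfolding ey by (auto intro: vector_derivative_unique_at)
    moreover have "G1 z = (Fxx z + Fyy z) / 4" using A[of z] by blast
    moreover have "G2 z = (Fxx' z + Fyy' z) / 4" using B[of z] by blast
    ultimately show "G1 z = G2 z" by metis
  qed
qed

lemma holo_cnj_cnj:
  assumes "g holomorphic_on UNIV"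
  shows "(\<lambda>v. cnj (g (cnj v))) holomorphic_on UNIV"
proof -
  have "cnj \<circ> g \<circ> cnj holomorphic_on UNIV"
    by (rule holomorphic_on_compose_cnj_cnj) (use assms in \<open>auto intro: holomorphic_on_subset\<close>)
  then show ?thesis by (simp add: o_def)
qed

lemma pb_mono:
  assumes "cmod w \<le> R"
  shows "pb w \<le> exp (pi * R\<^sup>2 / 2) / sqrt gc"
proof -
  have "(cmod w)\<^sup>2 \<le> R\<^sup>2" using assms by (intro power_mono) auto
  then have "exp (pi * (cmod w)\<^sup>2 / 2) \<le> exp (pi * R\<^sup>2 / 2)" by simp
  then show ?thesis unfolding pb_def using gc_pos by (simp add: divide_right_mono)
qed

lemma line_holo:
  assumes fs: "\<And>k. fs k \<in> fock_space" and gs: "\<And>k. gs k \<in> fock_space"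
    and sm: "summable (\<lambda>k. fock_norm (fs k) * fock_norm (gs k))"
  shows "(\<lambda>\<zeta>. \<Sum>k. fs k (\<alpha> * \<zeta> + a) * cnj (gs k (cnj (\<beta> * \<zeta> + b)))) holomorphic_on UNIV"
proof (rule holomorphic_uniform_sequence[where f = "\<lambda>n \<zeta>. \<Sum>k<n. fs k (\<alpha> * \<zeta> + a) * cnj (gs k (cnj (\<beta> * \<zeta> + b)))"])
  have hk: "(\<lambda>\<zeta>. fs k (\<alpha> * \<zeta> + a) * cnj (gs k (cnj (\<beta> * \<zeta> + b)))) holomorphic_on UNIV" for k
  proof -
    have h1: "(\<lambda>\<zeta>. fs k (\<alpha> * \<zeta> + a)) holomorphic_on UNIV"
      by (rule holomorphic_on_compose_gen[OF _ fock_spaceD(1)[OF fs], unfolded o_def]) (auto intro!: holomorphic_intros)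
    have h2: "(\<lambda>\<zeta>. cnj (gs k (cnj (\<beta> * \<zeta> + b)))) holomorphic_on UNIV"
      by (rule holomorphic_on_compose_gen[OF _ holo_cnj_cnj[OF fock_spaceD(1)[OF gs]], unfolded o_def]) (auto intro!: holomorphic_intros)
    show ?thesis by (intro holomorphic_intros h1 h2)
  qed
  show "(\<lambda>\<zeta>. \<Sum>k<n. fs k (\<alpha> * \<zeta> + a) * cnj (gs k (cnj (\<beta> * \<zeta> + b)))) holomorphic_on UNIV" for n
    by (intro holomorphic_intros hk)
  fix x :: complex
  define R1 where "R1 = cmod \<alpha> * (cmod x + 1) + cmod a"
  define R2 where "R2 = cmod \<beta> * (cmod x + 1) + cmod b"
  define B where "B = (exp (pi * R1\<^sup>2 / 2) / sqrt gc) * (exp (pi * R2\<^sup>2 / 2) / sqrt gc)"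
  have "uniform_limit (cball x 1) (\<lambda>n \<zeta>. \<Sum>k<n. fs k (\<alpha> * \<zeta> + a) * cnj (gs k (cnj (\<beta> * \<zeta> + b))))
          (\<lambda>\<zeta>. \<Sum>k. fs k (\<alpha> * \<zeta> + a) * cnj (gs k (cnj (\<beta> * \<zeta> + b)))) sequentially"
  proof (rule Weierstrass_m_test)
    show "summable (\<lambda>k. fock_norm (fs k) * fock_norm (gs k) * B)" by (rule summable_mult2[OF sm])
    fix k \<zeta> assume \<zeta>: "\<zeta> \<in> cball x 1"
    have nz: "cmod \<zeta> \<le> cmod x + 1"
      using \<zeta> norm_triangle_ineq2[of \<zeta> x] by (auto simp: dist_norm norm_minus_commute)
    have r1: "cmod (\<alpha> * \<zeta> + a) \<le> R1"
    proof -
      have "cmod (\<alpha> * \<zeta> + a) \<le> cmod \<alpha> * cmod \<zeta> + cmod a" by (metis norm_mult norm_triangle_ineq)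
      also have "\<dots> \<le> R1" unfolding R1_def using nz by (simp add: mult_left_mono)
      finally show ?thesis .
    qed
    have r2: "cmod (cnj (\<beta> * \<zeta> + b)) \<le> R2"
    proof -
      have "cmod (cnj (\<beta> * \<zeta> + b)) \<le> cmod \<beta> * cmod \<zeta> + cmod b" by (metis complex_mod_cnj norm_mult norm_triangle_ineq)
      also have "\<dots> \<le> R2" unfolding R2_def using nz by (simp add: mult_left_mono)
      finally show ?thesis .
    qed
    have "cmod (fs k (\<alpha> * \<zeta> + a) * cnj (gs k (cnj (\<beta> * \<zeta> + b)))) = cmod (fs k (\<alpha> * \<zeta> + a)) * cmod (gs k (cnj (\<beta> * \<zeta> + b)))"
      by (simp add: norm_mult)
    also have "\<dots> \<le> (fock_norm (fs k) * pb (\<alpha> * \<zeta> + a)) * (fock_norm (gs k) * pb (cnj (\<beta> * \<zeta> + b)))"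
      by (intro mult_mono point_bound'[OF fs] point_bound'[OF gs]) (auto intro!: mult_nonneg_nonneg fock_norm_nonneg pb_nonneg)
    also have "\<dots> \<le> (fock_norm (fs k) * (exp (pi * R1\<^sup>2 / 2) / sqrt gc)) * (fock_norm (gs k) * (exp (pi * R2\<^sup>2 / 2) / sqrt gc))"
      using gc_pos by (intro mult_mono mult_left_mono pb_mono r1 r2 fock_norm_nonneg) (auto intro!: mult_nonneg_nonneg divide_nonneg_nonneg fock_norm_nonneg pb_nonneg)
    also have "\<dots> = fock_norm (fs k) * fock_norm (gs k) * B" unfolding B_def by (simp add: algebra_simps)
    finally show "norm (fs k (\<alpha> * \<zeta> + a) * cnj (gs k (cnj (\<beta> * \<zeta> + b)))) \<le> fock_norm (fs k) * fock_norm (gs k) * B" .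
  qed
  then show "\<exists>d>0. cball x d \<subseteq> UNIV \<and> uniform_limit (cball x d) (\<lambda>n \<zeta>. \<Sum>k<n. fs k (\<alpha> * \<zeta> + a) * cnj (gs k (cnj (\<beta> * \<zeta> + b))))
          (\<lambda>\<zeta>. \<Sum>k. fs k (\<alpha> * \<zeta> + a) * cnj (gs k (cnj (\<beta> * \<zeta> + b)))) sequentially"
    by (intro exI[of _ 1]) auto
qed simp

lemma zero_limpt_reals: "(0::complex) islimpt range complex_of_real"
  unfolding islimpt_approachable
proof (intro allI impI)
  fix e :: real assume e: "e > 0"
  show "\<exists>x'\<in>range complex_of_real. x' \<noteq> 0 \<and> dist x' 0 < e"
  proof (intro bexI[of _ "complex_of_real (e / 2)"])
    show "complex_of_real (e / 2) \<in> range complex_of_real" by (rule rangeI)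
    show "complex_of_real (e / 2) \<noteq> 0 \<and> dist (complex_of_real (e / 2)) 0 < e" using e by simp
  qed
qed

lemma diag_zero:
  fixes P :: "complex \<Rightarrow> complex \<Rightarrow> complex"
  assumes hol: "\<And>\<alpha> \<beta> a b. (\<lambda>\<zeta>. P (\<alpha> * \<zeta> + a) (\<beta> * \<zeta> + b)) holomorphic_on UNIV"
    and zero: "\<And>z. P z (cnj z) = 0"
  shows "P w v = 0"
proof -
  have s1: "P (1 * \<zeta> + \<i> * complex_of_real y) (1 * \<zeta> + (- \<i> * complex_of_real y)) = 0" for \<zeta> y
  proof (rule analytic_continuation[of "\<lambda>\<zeta>. P (1 * \<zeta> + \<i> * complex_of_real y) (1 * \<zeta> + (- \<i> * complex_of_real y))" UNIV "range complex_of_real" 0])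
    show "(\<lambda>\<zeta>. P (1 * \<zeta> + \<i> * complex_of_real y) (1 * \<zeta> + - \<i> * complex_of_real y)) holomorphic_on UNIV" by (rule hol)
    show "0 islimpt range complex_of_real" by (rule zero_limpt_reals)
    fix z assume "z \<in> range complex_of_real"
    then obtain x where z: "z = complex_of_real x" by auto
    have "cnj (complex_of_real x + \<i> * complex_of_real y) = complex_of_real x + - \<i> * complex_of_real y"
      by (simp add: complex_eq_iff)
    then show "P (1 * z + \<i> * complex_of_real y) (1 * z + - \<i> * complex_of_real y) = 0"
      using zero[of "complex_of_real x + \<i> * complex_of_real y"] by (simp add: z)
  qed auto
  have s2: "P (\<i> * \<eta> + \<zeta>) (- \<i> * \<eta> + \<zeta>) = 0" for \<zeta> \<eta>
  proof (rule analytic_continuation[of "\<lambda>\<eta>. P (\<i> * \<eta> + \<zeta>) (- \<i> * \<eta> + \<zeta>)" UNIV "range complex_of_real" 0])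
    show "(\<lambda>\<eta>. P (\<i> * \<eta> + \<zeta>) (- \<i> * \<eta> + \<zeta>)) holomorphic_on UNIV" by (rule hol)
    show "0 islimpt range complex_of_real" by (rule zero_limpt_reals)
    fix z assume "z \<in> range complex_of_real"
    then obtain y where z: "z = complex_of_real y" by auto
    show "P (\<i> * z + \<zeta>) (- \<i> * z + \<zeta>) = 0"
      using s1[of \<zeta> y] by (simp add: z algebra_simps)
  qed auto
  have "P (\<i> * ((w - v) / (2 * \<i>)) + (w + v) / 2) (- \<i> * ((w - v) / (2 * \<i>)) + (w + v) / 2) = 0"
    by (rule s2)
  moreover have "\<i> * ((w - v) / (2 * \<i>)) + (w + v) / 2 = w" by (simp add: field_simps)
  moreover have "- \<i> * ((w - v) / (2 * \<i>)) + (w + v) / 2 = v" by (simp add: field_simps)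
  ultimately show ?thesis by simp
qed

lemma nuc_apply_integral:
  assumes n: "nuc T fs gs" and h: "h \<in> fock_space"
  shows "T h w = (\<integral>u. h u * mu u * (\<Sum>k. fs k w * cnj (gs k u)) \<partial>lborel)"
proof -
  have fs: "\<And>k. fs k \<in> fock_space" and gs: "\<And>k. gs k \<in> fock_space"
    and sm: "summable (\<lambda>k. fock_norm (fs k) * fock_norm (gs k))"
    and rep: "\<And>h w. h \<in> fock_space \<Longrightarrow> T h w = (\<Sum>k. fock_inner h (gs k) * fs k w)"
    using n unfolding nuc_def by auto
  define F where "F = (\<lambda>k u. fs k w * (h u * cnj (gs k u) * mu u))"
  have intF: "integrable lborel (F k)" for k
    unfolding F_def by (intro integrable_mult_right L2_prod_integrable(2)[OF h gs])
  have nF: "norm (F k u) = cmod (fs k w) * cmod (gs k u) * (cmod (h u) * exp (- pi * (cmod u)\<^sup>2))" for k u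
    unfolding F_def by (simp add: norm_mult)
  have ps: "summable (\<lambda>k. norm (F k u))" for u
    unfolding nF using summable_mult2[OF nuc_point_summable[OF fs gs sm, of w u], of "cmod (h u) * exp (- pi * (cmod u)\<^sup>2)"]
    by (simp add: mult.assoc)
  have "summable (\<lambda>k. \<integral>u. norm (F k u) \<partial>lborel)"
  proof (rule summable_comparison_test)
    show "summable (\<lambda>k. fock_norm (fs k) * fock_norm (gs k) * (pb w * fock_norm h))"
      by (rule summable_mult2[OF sm])
    show "\<exists>N. \<forall>k\<ge>N. norm (\<integral>u. norm (F k u) \<partial>lborel) \<le> fock_norm (fs k) * fock_norm (gs k) * (pb w * fock_norm h)"
    proof (intro exI allI impI)
      fix k
      have "(\<integral>u. norm (F k u) \<partial>lborel) = cmod (fs k w) * (\<integral>u. cmod (h u) * cmod (gs k u) * exp (- pi * (cmod u)\<^sup>2) \<partial>lborel)"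
      proof -
        have "(\<lambda>u. norm (F k u)) = (\<lambda>u. cmod (fs k w) * (cmod (h u) * cmod (gs k u) * exp (- pi * (cmod u)\<^sup>2)))"
          unfolding nF by (simp add: algebra_simps)
        then show ?thesis by simp
      qed
      also have "\<dots> \<le> (fock_norm (fs k) * pb w) * (fock_norm h * fock_norm (gs k))"
        by (intro mult_mono point_bound'[OF fs] fock_CS_abs[OF h gs]) (auto intro!: mult_nonneg_nonneg fock_norm_nonneg pb_nonneg integral_nonneg_AE)
      finally have "(\<integral>u. norm (F k u) \<partial>lborel) \<le> (fock_norm (fs k) * pb w) * (fock_norm h * fock_norm (gs k))" .
      moreover have "(\<integral>u. norm (F k u) \<partial>lborel) \<ge> 0" by (rule integral_nonneg_AE) auto
      ultimately show "norm (\<integral>u. norm (F k u) \<partial>lborel) \<le> fock_norm (fs k) * fock_norm (gs k) * (pb w * fock_norm h)"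
        by (simp add: algebra_simps)
    qed
  qed
  then have eq: "(\<integral>u. (\<Sum>k. F k u) \<partial>lborel) = (\<Sum>k. integral\<^sup>L lborel (F k))"
    using intF ps by (intro integral_suminf) auto
  have "T h w = (\<Sum>k. integral\<^sup>L lborel (F k))"
    unfolding rep[OF h] F_def fock_inner_def by (simp add: mult.commute)
  also have "\<dots> = (\<integral>u. (\<Sum>k. F k u) \<partial>lborel)" by (rule eq[symmetric])
  also have "\<dots> = (\<integral>u. h u * mu u * (\<Sum>k. fs k w * cnj (gs k u)) \<partial>lborel)"
  proof (rule Bochner_Integration.integral_cong[OF refl])
    fix u
    have s: "summable (\<lambda>k. fs k w * cnj (gs k u))"
      by (rule summable_norm_cancel) (use nuc_point_summable[OF fs gs sm, of w u] in \<open>simp add: norm_mult\<close>)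
    show "(\<Sum>k. F k u) = h u * mu u * (\<Sum>k. fs k w * cnj (gs k u))"
      unfolding F_def using suminf_mult[OF s, of "h u * mu u"] by (simp add: algebra_simps)
  qed
  finally show ?thesis .
qed

lemma uniqueness:
  assumes tc: "fock_trace_class T" and lap: "has_laplacian (berezin (fock_proj m)) (berezin T)"
    and h: "h \<in> fock_space"
  shows "T h = T0 m h"
proof -
  obtain fs gs where n: "nuc T fs gs" using tc unfolding trace_class_nuc by blast
  have fs: "\<And>k. fs k \<in> fock_space" and gs: "\<And>k. gs k \<in> fock_space"
    and sm: "summable (\<lambda>k. fock_norm (fs k) * fock_norm (gs k))"
    using n unfolding nuc_def by auto
  have n0: "nuc (T0 m) (T0f m) (T0g m)" by (rule T0_nuc)
  have fs0: "\<And>k. T0f m k \<in> fock_space" and gs0: "\<And>k. T0g m k \<in> fock_space"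
    and sm0: "summable (\<lambda>k. fock_norm (T0f m k) * fock_norm (T0g m k))"
    using n0 unfolding nuc_def by auto
  have BB: "berezin T = berezin (T0 m)" by (rule laplacian_unique[OF lap laplacian_proj])
  have diag: "(\<Sum>k. fs k z * cnj (gs k z)) = (\<Sum>k. T0f m k z * cnj (T0g m k z))" for z
  proof -
    have "complex_of_real (gc\<^sup>2 * exp (- pi * (cmod z)\<^sup>2)) * (\<Sum>k. fs k z * cnj (gs k z)) =
          complex_of_real (gc\<^sup>2 * exp (- pi * (cmod z)\<^sup>2)) * (\<Sum>k. T0f m k z * cnj (T0g m k z))"
    proof -
      have "complex_of_real (gc\<^sup>2 * exp (- pi * (cmod z)\<^sup>2)) * (\<Sum>k. fs k z * cnj (gs k z)) = berezin T z"
        by (rule berezin_nuc[OF n, symmetric])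
      also have "\<dots> = berezin (T0 m) z" using BB by simp
      also have "\<dots> = complex_of_real (gc\<^sup>2 * exp (- pi * (cmod z)\<^sup>2)) * (\<Sum>k. T0f m k z * cnj (T0g m k z))"
        by (rule berezin_nuc[OF n0])
      finally show ?thesis .
    qed
    moreover have "complex_of_real (gc\<^sup>2 * exp (- pi * (cmod z)\<^sup>2)) \<noteq> 0" using gc_pos by simp
    ultimately show ?thesis by (rule mult_left_cancel[THEN iffD1, rotated])
  qed
  define P where "P = (\<lambda>w v. (\<Sum>k. fs k w * cnj (gs k (cnj v))) - (\<Sum>k. T0f m k w * cnj (T0g m k (cnj v))))"
  have Pz: "P w v = 0" for w v
  proof (rule diag_zero[of P])
    fix \<alpha> \<beta> a b
    show "(\<lambda>\<zeta>. P (\<alpha> * \<zeta> + a) (\<beta> * \<zeta> + b)) holomorphic_on UNIV"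
      unfolding P_def by (intro holomorphic_intros line_holo[OF fs gs sm] line_holo[OF fs0 gs0 sm0])
  next
    fix z show "P z (cnj z) = 0" unfolding P_def using diag[of z] by simp
  qed
  have full: "(\<Sum>k. fs k w * cnj (gs k u)) = (\<Sum>k. T0f m k w * cnj (T0g m k u))" for w u
    using Pz[of w "cnj u"] unfolding P_def by simp
  show ?thesis
  proof
    fix w
    show "T h w = T0 m h w"
      unfolding nuc_apply_integral[OF n h] nuc_apply_integral[OF n0 h] full ..
  qed
qed

theorem lemma5p3:
  fixes m :: nat
  shows "W21 (fock_proj m) \<and>
    (\<forall>T. fock_trace_class T \<and> has_laplacian (berezin (fock_proj m)) (berezin T) \<longrightarrow>
       (\<forall>h\<in>fock_space. T h = (\<lambda>w. complex_of_real pi *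
          (of_nat m * fock_proj (m - 1) h w
           - of_nat (2 * m + 1) * fock_proj m h w
           + of_nat (m + 1) * fock_proj (m + 1) h w))))"
proof (intro conjI allI impI ballI)
  show "W21 (fock_proj m)" by (rule W21_proj)
next
  fix T h assume "fock_trace_class T \<and> has_laplacian (berezin (fock_proj m)) (berezin T)" and h: "h \<in> fock_space"
  then have "T h = T0 m h" using uniqueness by blast
  then show "T h = (\<lambda>w. complex_of_real pi *
          (of_nat m * fock_proj (m - 1) h w
           - of_nat (2 * m + 1) * fock_proj m h w
           + of_nat (m + 1) * fock_proj (m + 1) h w))"
    unfolding T0_def .
qed

end
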